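(* (i) Let $a,b,\mu,\nu\in\mathbb{C}$ with $\operatorname{Re}\mu>0$ and $\operatorname{Re}\nu>0$, and let $0<x<z$ be real. Then $$\int_x^z (y-x)^{\mu-1}(z-y)^{\nu-1}y^{a-b-\mu}\,dy=\frac{\Gamma(\mu)\Gamma(\nu)}{\Gamma(\mu+\nu)}(z-x)^{\mu+\nu-1}x^{a-b-\mu}\,F\Big(b-a+\mu,\,\mu,\,\mu+\nu,\,1-\frac{z}{x}\Big).$$ (ii) Let $x>1$ and let $a,b,c,\mu,\nu\in\mathbb{C}$ with $\operatorname{Re}\mu>0$, $\operatorname{Re}\nu>0$, $\operatorname{Re}a>0$, $\operatorname{Re}b>0$, $c\notin\{0,-1,-2,\dots\}$. Then $$\Gamma(a)\Gamma(b)\,x^{-a+\mu}F(a,b,c,x^{-1})=\frac{\Gamma(a+\nu)\Gamma(b+\mu)}{\Gamma(\nu+\mu)}\int_x^{+\infty}I(x,z)\,z^{-a-\nu}F\big(a+\nu,\,b+\mu,\,c,\,z^{-1}\big)\,dz,$$ where $I(x,z)=(z-x)^{\nu+\mu-1}F\big(b-a+\mu,\,\mu,\,\nu+\mu,\,1-\frac{z}{x}\big)$.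
   Context: $F(a,b,c,z)=\sum_{n\ge0}\frac{(a)_n(b)_n}{(c)_n n!}z^n$ for $|z|<1$, with $(a)_n=\Gamma(a+n)/\Gamma(a)$, is the Gauss hypergeometric function, extended by analytic continuation (principal branch) to $\mathbb{C}\setminus[1,\infty)$. Powers of positive reals are principal. *)

theory Defs
  imports "HOL-Analysis.Analysis"
begin

text \<open>Gauss hypergeometric series, valid for norm z < 1.\<close>
definition hyp_series :: "complex \<Rightarrow> complex \<Rightarrow> complex \<Rightarrow> complex \<Rightarrow> complex" where
  "hyp_series a b c z =
     (\<Sum>n. pochhammer a n * pochhammer b n / (pochhammer c n * fact n) * z ^ n)"

definition hyp_dom :: "complex set" where
  "hyp_dom = - (complex_of_real ` {1..})"

text \<open>Principal branch of the analytic continuation of the series to the cut plane: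
  the holomorphic function on hyp_dom agreeing with the series on the unit disc
  (unique by the identity theorem, since hyp_dom is connected).\<close>
definition hypF :: "complex \<Rightarrow> complex \<Rightarrow> complex \<Rightarrow> complex \<Rightarrow> complex" where
  "hypF a b c = (SOME g. g holomorphic_on hyp_dom \<and>
                    (\<forall>w. norm w < 1 \<longrightarrow> g w = hyp_series a b c w))"

end

theory Submission
  imports Defs "HOL-Complex_Analysis.Complex_Analysis" "HOL-Real_Asymp.Real_Asymp"
begin

lemma hyp_dom_alt: "hyp_dom = {w. Im w \<noteq> 0 \<or> Re w < 1}"
proof -
  have "w \<in> complex_of_real ` {1..} \<longleftrightarrow> Im w = 0 \<and> Re w \<ge> 1" for w
    by (auto simp: image_iff complex_eq_iff intro!: bexI[of _ "Re w"])
  then show ?thesis unfolding hyp_dom_def by auto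
qed

lemma open_hyp_dom: "open hyp_dom"
  unfolding hyp_dom_alt Collect_disj_eq
  by (intro open_Un open_Collect_neq open_Collect_less continuous_intros)

lemma starlike_hyp_dom: "starlike hyp_dom"
  unfolding starlike_def
proof (intro bexI[of _ 0] ballI)
  show "0 \<in> hyp_dom" by (simp add: hyp_dom_alt)
  fix w assume w: "w \<in> hyp_dom"
  show "closed_segment 0 w \<subseteq> hyp_dom"
  proof
    fix v assume "v \<in> closed_segment 0 w"
    then obtain u :: real where u: "0 \<le> u" "u \<le> 1" "v = u *\<^sub>R w"
      by (auto simp: closed_segment_def)
    show "v \<in> hyp_dom"
    proof (cases "Im w = 0")
      case True
      with w have "Re w < 1" by (auto simp: hyp_dom_alt)
      have "u * Re w < 1"
      proof (cases "Re w \<le> 0")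
        case True then show ?thesis using u by (smt (verit) mult_nonneg_nonpos)
      next
        case False then show ?thesis using u \<open>Re w < 1\<close> by (smt (verit) mult_left_le_one_le)
      qed
      then show ?thesis using u by (simp add: hyp_dom_alt)
    next
      case False
      show ?thesis
      proof (cases "u = 0")
        case True then show ?thesis using u by (simp add: hyp_dom_alt)
      next
        case False then show ?thesis using u \<open>Im w \<noteq> 0\<close> by (simp add: hyp_dom_alt)
      qed
    qed
  qed
qed

lemma connected_hyp_dom: "connected hyp_dom"
  by (rule starlike_imp_connected[OF starlike_hyp_dom])

lemma ball_sub_hyp_dom: "ball 0 1 \<subseteq> hyp_dom"
proof
  fix w :: complex assume "w \<in> ball 0 1"
  then have "norm w < 1" by simp
  then have "Re w < 1" using abs_Re_le_cmod[of w] by linarith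
  then show "w \<in> hyp_dom" by (simp add: hyp_dom_alt)
qed

lemma one_minus_tw_slit:
  assumes "w \<in> hyp_dom" "0 \<le> t" "t \<le> 1"
  shows "1 - of_real t * w \<notin> \<real>\<^sub>\<le>\<^sub>0"
proof (cases "Im w = 0")
  case True
  with assms have "Re w < 1" by (auto simp: hyp_dom_alt)
  have "t * Re w < 1"
  proof (cases "Re w \<le> 0")
    case True then show ?thesis using assms by (smt (verit) mult_nonneg_nonpos)
  next
    case False then show ?thesis using assms \<open>Re w < 1\<close> by (smt (verit) mult_left_le_one_le)
  qed
  then show ?thesis by (auto simp: complex_nonpos_Reals_iff)
next
  case False
  show ?thesis
  proof (cases "t = 0")
    case True then show ?thesis by (auto simp: complex_nonpos_Reals_iff)
  next
    case False then show ?thesis using assms \<open>Im w \<noteq> 0\<close> by (auto simp: complex_nonpos_Reals_iff)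
  qed
qed

lemma hypF_eqI:
  assumes hol: "g holomorphic_on hyp_dom"
      and eq: "\<And>w. norm w < 1 \<Longrightarrow> g w = hyp_series a b c w"
      and w: "w \<in> hyp_dom"
  shows "hypF a b c w = g w"
proof -
  have ex: "\<exists>g. g holomorphic_on hyp_dom \<and> (\<forall>w. norm w < 1 \<longrightarrow> g w = hyp_series a b c w)"
    using hol eq by blast
  define h where "h = hypF a b c"
  have h: "h holomorphic_on hyp_dom \<and> (\<forall>w. norm w < 1 \<longrightarrow> h w = hyp_series a b c w)"
    unfolding h_def hypF_def by (rule someI_ex[OF ex])
  have "h w = g w"
    by (rule analytic_continuation_open[of "ball 0 1" hyp_dom h g w])
       (use h hol w eq ball_sub_hyp_dom open_hyp_dom connected_hyp_dom in \<open>auto simp: dist_norm\<close>)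
  then show ?thesis by (simp add: h_def)
qed

lemma hypF_series:
  assumes hol: "g holomorphic_on hyp_dom"
      and eq: "\<And>w. norm w < 1 \<Longrightarrow> g w = hyp_series a b c w"
      and w: "norm w < 1"
  shows "hypF a b c w = hyp_series a b c w"
  using hypF_eqI[OF hol eq, of w] eq[OF w] w ball_sub_hyp_dom by auto


lemma integrable_by_bound_Ioo:
  fixes f :: "real \<Rightarrow> complex"
  assumes cont: "continuous_on {0<..<1} f"
      and h: "h integrable_on {0..1}"
      and bnd: "\<And>t. t \<in> {0..1} \<Longrightarrow> norm (f t) \<le> h t"
  shows "f absolutely_integrable_on {0<..<1}" "f integrable_on {0..1}"
proof -
  show ai: "f absolutely_integrable_on {0<..<1}"
  proof (rule measurable_bounded_by_integrable_imp_absolutely_integrable)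
    show "f \<in> borel_measurable (lebesgue_on {0<..<1})"
      by (rule continuous_imp_measurable_on_sets_lebesgue[OF cont]) auto
    show "h integrable_on {0<..<1}" using h by (simp add: integrable_on_Icc_iff_Ioo)
  qed (use bnd in auto)
  then have "f integrable_on {0<..<1}"
    using set_lebesgue_integral_eq_integral(1) by blast
  then show "f integrable_on {0..1}" by (simp add: integrable_on_Icc_iff_Ioo)
qed

lemma param_holo:
  fixes f f' :: "complex \<Rightarrow> real \<Rightarrow> complex" and S :: "complex set"
  assumes S: "open S"
      and der: "\<And>w t. w \<in> S \<Longrightarrow> t \<in> {0<..<1} \<Longrightarrow> ((\<lambda>w. f w t) has_field_derivative f' w t) (at w)"
      and contd: "continuous_on (S \<times> {0<..<1}) (\<lambda>(w,t). f' w t)"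
      and contf: "\<And>w. w \<in> S \<Longrightarrow> continuous_on {0<..<1} (f w)"
      and dom: "\<And>w0. w0 \<in> S \<Longrightarrow> \<exists>d>0. cball w0 d \<subseteq> S \<and>
                  (\<exists>h. h integrable_on {0..1} \<and> (\<forall>w\<in>cball w0 d. \<forall>t\<in>{0..1}. norm (f w t) \<le> h t))"
  shows "(\<lambda>w. integral {0..1} (f w)) holomorphic_on S"
    and "\<And>w. w \<in> S \<Longrightarrow> f w integrable_on {0..1}"
proof -
  show intg: "f w integrable_on {0..1}" if w: "w \<in> S" for w
  proof -
    obtain d h where d: "d > 0" "cball w d \<subseteq> S" and h: "h integrable_on {0..1}"
      and hb: "\<forall>v\<in>cball w d. \<forall>t\<in>{0..1}. norm (f v t) \<le> h t"
      using dom[OF w] by blast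
    show ?thesis
      by (rule integrable_by_bound_Ioo(2)[OF contf[OF w] h]) (use hb d in auto)
  qed
  define \<delta> :: "nat \<Rightarrow> real" where "\<delta> n = 1 / (real n + 3)" for n
  have \<delta>: "0 < \<delta> n" "\<delta> n \<le> 1/3" for n
    by (auto simp: \<delta>_def field_simps)
  have \<delta>01: "0 \<le> \<delta> n" "\<delta> n \<le> 1" "0 \<le> 1 - \<delta> n" "1 - \<delta> n \<le> 1" for n
    using \<delta>[of n] by auto
  define Fn where "Fn n w = integral {\<delta> n..1 - \<delta> n} (f w)" for n w
  have holn: "Fn n holomorphic_on S" for n
  proof -
    have "Fn n field_differentiable (at w0)" if w0: "w0 \<in> S" for w0
    proof -
      obtain r where r: "r > 0" "ball w0 r \<subseteq> S"
        using S w0 open_contains_ball by blast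
      have sub: "{\<delta> n..1 - \<delta> n} \<subseteq> {0<..<1}" using \<delta>[of n] by auto
      have "(\<lambda>w. integral (cbox (\<delta> n) (1 - \<delta> n)) (f w)) holomorphic_on ball w0 r"
      proof (rule leibniz_rule_holomorphic[where fx = f'])
        show "((\<lambda>w. f w t) has_field_derivative f' w t) (at w within ball w0 r)"
          if "w \<in> ball w0 r" "t \<in> cbox (\<delta> n) (1 - \<delta> n)" for w t
        proof -
          have "w \<in> S" "t \<in> {0<..<1}" using that r sub by auto
          from der[OF this] show ?thesis by (rule has_field_derivative_at_within)
        qed
        show "f w integrable_on cbox (\<delta> n) (1 - \<delta> n)" if "w \<in> ball w0 r" for w
          using that r sub
          by (auto intro!: integrable_continuous_interval continuous_on_subset[OF contf])
        show "continuous_on (ball w0 r \<times> cbox (\<delta> n) (1 - \<delta> n)) (\<lambda>(w, t). f' w t)"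
          by (rule continuous_on_subset[OF contd]) (use r sub in auto)
      qed auto
      then have "(\<lambda>w. integral (cbox (\<delta> n) (1 - \<delta> n)) (f w)) field_differentiable (at w0)"
        using r by (intro holomorphic_on_imp_differentiable_at) auto
      then show ?thesis by (simp add: Fn_def[abs_def])
    qed
    then show ?thesis using S by (simp add: holomorphic_on_open field_differentiable_def)
  qed
  have ulim: "\<exists>d. 0 < d \<and> cball w0 d \<subseteq> S \<and>
      uniform_limit (cball w0 d) Fn (\<lambda>w. integral {0..1} (f w)) sequentially" if w0: "w0 \<in> S" for w0
  proof -
    obtain d h where d: "d > 0" "cball w0 d \<subseteq> S" and h: "h integrable_on {0..1}"
      and hb: "\<forall>v\<in>cball w0 d. \<forall>t\<in>{0..1}. norm (f v t) \<le> h t"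
      using dom[OF w0] by blast
    define e where "e n = integral {0..\<delta> n} h + integral {1 - \<delta> n..1} h" for n
    have "(\<lambda>n. \<delta> n) \<longlonglongrightarrow> 0"
      unfolding \<delta>_def by real_asymp
    have t1: "(\<lambda>n. integral {0..\<delta> n} h) \<longlonglongrightarrow> integral {0..0} h"
    proof (rule continuous_on_tendsto_compose[OF indefinite_integral_continuous_1[OF h]])
      show "(\<lambda>n. \<delta> n) \<longlonglongrightarrow> 0" by fact
    qed (use \<delta>01 in \<open>auto intro!: always_eventually\<close>)
    have t2: "(\<lambda>n. integral {1 - \<delta> n..1} h) \<longlonglongrightarrow> integral {1..1} h"
    proof (rule continuous_on_tendsto_compose[OF indefinite_integral_continuous_1'[OF h]])
      show "(\<lambda>n. 1 - \<delta> n) \<longlonglongrightarrow> 1"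
        using tendsto_diff[OF tendsto_const[of 1] \<open>(\<lambda>n. \<delta> n) \<longlonglongrightarrow> 0\<close>] by simp
    qed (use \<delta>01 in \<open>auto intro!: always_eventually\<close>)
    have "e \<longlonglongrightarrow> 0"
      using tendsto_add[OF t1 t2] by (simp add: e_def[abs_def])
    have bound: "norm (integral {0..1} (f w) - Fn n w) \<le> e n" if w: "w \<in> cball w0 d" for w n
    proof -
      have iw: "f w integrable_on {0..1}" using intg w d by auto
      have dn: "0 \<le> \<delta> n" "\<delta> n \<le> 1 - \<delta> n" "1 - \<delta> n \<le> 1" using \<delta>[of n] by auto
      have "integral {0..\<delta> n} (f w) + integral {\<delta> n..1} (f w) = integral {0..1} (f w)"
        by (rule Henstock_Kurzweil_Integration.integral_combine) (use dn iw in auto)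
      moreover have "integral {\<delta> n..1 - \<delta> n} (f w) + integral {1 - \<delta> n..1} (f w) = integral {\<delta> n..1} (f w)"
        by (rule Henstock_Kurzweil_Integration.integral_combine) (use dn iw in \<open>auto intro: integrable_subinterval_real\<close>)
      ultimately have eq: "integral {0..1} (f w) - Fn n w = integral {0..\<delta> n} (f w) + integral {1 - \<delta> n..1} (f w)"
        by (simp add: Fn_def algebra_simps)
      have "norm (integral {0..\<delta> n} (f w)) \<le> integral {0..\<delta> n} h"
        by (rule integral_norm_bound_integral)
           (use dn iw h hb w in \<open>auto intro: integrable_subinterval_real\<close>)
      moreover have "norm (integral {1 - \<delta> n..1} (f w)) \<le> integral {1 - \<delta> n..1} h"
        by (rule integral_norm_bound_integral)
           (use dn iw h hb w in \<open>auto intro: integrable_subinterval_real\<close>)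
      ultimately show ?thesis unfolding eq e_def by (smt (verit) norm_triangle_ineq)
    qed
    have "uniform_limit (cball w0 d) Fn (\<lambda>w. integral {0..1} (f w)) sequentially"
    proof (rule uniform_limitI)
      fix \<epsilon> :: real assume "\<epsilon> > 0"
      with \<open>e \<longlonglongrightarrow> 0\<close> have "eventually (\<lambda>n. e n < \<epsilon>) sequentially"
        by (auto dest: order_tendstoD)
      then show "\<forall>\<^sub>F n in sequentially. \<forall>w\<in>cball w0 d. dist (Fn n w) (integral {0..1} (f w)) < \<epsilon>"
      proof eventually_elim
        case (elim n)
        show ?case
        proof
          fix w assume "w \<in> cball w0 d"
          from bound[OF this, of n] elim show "dist (Fn n w) (integral {0..1} (f w)) < \<epsilon>"
            by (simp add: dist_norm norm_minus_commute)
        qed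
      qed
    qed
    with d show ?thesis by blast
  qed
  show "(\<lambda>w. integral {0..1} (f w)) holomorphic_on S"
    by (rule holomorphic_uniform_sequence[OF S holn ulim])
qed


lemma cpowr_pos: "t > 0 \<Longrightarrow> complex_of_real t powr s = exp (s * of_real (ln t))"
  by (simp add: powr_def Ln_of_real)

definition bint :: "complex \<Rightarrow> complex \<Rightarrow> real \<Rightarrow> complex" where
  "bint p q t = of_real t powr (p - 1) * of_real (1 - t) powr (q - 1)"

lemma bint_alt: "t \<in> {0<..<1} \<Longrightarrow>
   bint p q t = exp ((p - 1) * of_real (ln t)) * exp ((q - 1) * of_real (ln (1 - t)))"
proof -
  assume t: "t \<in> {0<..<1}"
  have "complex_of_real (1 - t) powr (q - 1) = exp ((q - 1) * of_real (ln (1 - t)))"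
    by (rule cpowr_pos) (use t in auto)
  moreover have "complex_of_real t powr (p - 1) = exp ((p - 1) * of_real (ln t))"
    by (rule cpowr_pos) (use t in auto)
  ultimately show ?thesis by (simp only: bint_def)
qed

lemma norm_bint: "t \<in> {0..1} \<Longrightarrow> norm (bint p q t) = t powr (Re p - 1) * (1 - t) powr (Re q - 1)"
  by (simp add: bint_def norm_mult norm_powr_real_powr)

lemma cont_bint: "continuous_on {0<..<1} (bint p q)"
proof -
  have "continuous_on {0<..<1} (\<lambda>t. exp ((p - 1) * of_real (ln t)) * exp ((q - 1) * of_real (ln (1 - t))))"
    by (intro continuous_intros) auto
  then show ?thesis by (rule continuous_on_cong[THEN iffD1, rotated 2]) (auto simp: bint_alt)
qed

lemma bint_holo_p:
  assumes q: "Re q > 0"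
  shows "(\<lambda>p. integral {0..1} (bint p q)) holomorphic_on {p. Re p > 0}"
    and "Re p > 0 \<Longrightarrow> bint p q integrable_on {0..1}"
proof -
  have S: "open {p::complex. Re p > 0}" by (intro open_Collect_less continuous_intros)
  note * = param_holo[OF S, of "\<lambda>p t. bint p q t" "\<lambda>p t. of_real (ln t) * bint p q t"]
  have der: "((\<lambda>p. bint p q t) has_field_derivative of_real (ln t) * bint p q t) (at p)"
    if t: "t \<in> {0<..<1}" for p t
  proof -
    have "((\<lambda>p. exp ((p - 1) * of_real (ln t)) * exp ((q - 1) * of_real (ln (1 - t))))
           has_field_derivative of_real (ln t) * (exp ((p - 1) * of_real (ln t)) * exp ((q - 1) * of_real (ln (1 - t))))) (at p)"
      by (auto intro!: derivative_eq_intros simp: algebra_simps)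
    then show ?thesis using t by (simp add: bint_alt)
  qed
  have contd: "continuous_on ({p. Re p > 0} \<times> {0<..<1}) (\<lambda>(p, t). of_real (ln t) * bint p q t)"
  proof -
    have "continuous_on ({p. Re p > 0} \<times> {0<..<1}) (\<lambda>x. of_real (ln (snd x)) *
            (exp ((fst x - 1) * of_real (ln (snd x))) * exp ((q - 1) * of_real (ln (1 - snd x)))))"
      by (intro continuous_intros) auto
    then show ?thesis
      by (rule continuous_on_cong[THEN iffD1, rotated 2]) (auto simp: bint_alt)
  qed
  have dom: "\<exists>d>0. cball p0 d \<subseteq> {p. Re p > 0} \<and>
      (\<exists>h. h integrable_on {0..1} \<and> (\<forall>p\<in>cball p0 d. \<forall>t\<in>{0..1}. norm (bint p q t) \<le> h t))"
    if p0: "p0 \<in> {p. Re p > 0}" for p0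
  proof -
    define d where "d = Re p0 / 2"
    have d: "d > 0" using p0 by (simp add: d_def)
    have sub: "Re p \<ge> d" if "p \<in> cball p0 d" for p
    proof -
      have "\<bar>Re p0 - Re p\<bar> \<le> norm (p0 - p)" using abs_Re_le_cmod[of "p0 - p"] by simp
      also have "\<dots> \<le> d" using that by (simp add: dist_norm)
      finally have "\<bar>Re p0 - Re p\<bar> \<le> d" .
      then show ?thesis unfolding d_def by arith
    qed
    define h where "h t = t powr (d - 1) * (1 - t) powr (Re q - 1)" for t
    have hi: "h integrable_on {0..1}" unfolding h_def using d q by (intro integrable_Beta') auto
    have hb: "norm (bint p q t) \<le> h t" if "p \<in> cball p0 d" "t \<in> {0..1}" for p t
    proof -
      have "norm (bint p q t) = t powr (Re p - 1) * (1 - t) powr (Re q - 1)"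
        using that by (simp add: norm_bint)
      also have "\<dots> \<le> h t" unfolding h_def
      proof (rule mult_right_mono)
        show "t powr (Re p - 1) \<le> t powr (d - 1)"
        proof (cases "t = 0")
          case False then show ?thesis using that sub[OF that(1)] by (intro powr_mono') auto
        qed simp
      qed simp
      finally show ?thesis .
    qed
    have "cball p0 d \<subseteq> {p. Re p > 0}" using sub d by force
    with d hi hb show ?thesis by blast
  qed
  show "(\<lambda>p. integral {0..1} (bint p q)) holomorphic_on {p. Re p > 0}"
    by (rule *(1)) (use der contd cont_bint dom in auto)
  show "Re p > 0 \<Longrightarrow> bint p q integrable_on {0..1}"
    by (rule *(2)) (use der contd cont_bint dom in auto)
qed


lemma halfplane_eq:
  assumes f: "f holomorphic_on {p. Re p > 0}" and g: "g holomorphic_on {p. Re p > 0}"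
      and eq: "\<And>r. r > 0 \<Longrightarrow> f (complex_of_real r) = g (complex_of_real r)"
      and p: "Re p > 0"
  shows "f p = g p"
proof -
  have S: "open {p::complex. Re p > 0}" by (intro open_Collect_less continuous_intros)
  have C: "connected {p::complex. Re p > 0}" by (rule connected_halfspace_Re_gt)
  have lim: "1 islimpt (complex_of_real ` {0<..})"
  proof (rule islimpt_approachable[THEN iffD2], intro allI impI)
    fix e :: real assume e: "e > 0"
    define r where "r = 1 + min (e/2) (1/2)"
    have r0: "r > 0" "r \<noteq> 1" using e by (auto simp: r_def min_def)
    have "dist r 1 < e" using e by (auto simp: r_def dist_real_def min_def)
    then have "dist (complex_of_real r) (complex_of_real 1) < e" by (simp only: dist_of_real)
    then have "complex_of_real r \<in> complex_of_real ` {0<..}" "complex_of_real r \<noteq> 1"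
         "dist (complex_of_real r) 1 < e"
      using r0 by auto
    then show "\<exists>x'\<in>complex_of_real ` {0<..}. x' \<noteq> 1 \<and> dist x' 1 < e" by blast
  qed
  have "f p - g p = 0"
    by (rule analytic_continuation[of "\<lambda>z. f z - g z" "{p. Re p > 0}" "complex_of_real ` {0<..}" 1])
       (use f g S C lim eq p in \<open>auto intro!: holomorphic_intros\<close>)
  then show ?thesis by simp
qed

lemma reflect01:
  fixes f :: "real \<Rightarrow> 'a::banach"
  assumes "(f has_integral I) {0..1}"
  shows "((\<lambda>t. f (1 - t)) has_integral I) {0..1}"
proof -
  have "((\<lambda>x. f ((-1) *\<^sub>R x + 1)) has_integral (1 / (\<bar>-1\<bar> ^ DIM(real))) *\<^sub>R I)
          ((\<lambda>x. (1 / (-1)) *\<^sub>R x + -((1 / (-1)) *\<^sub>R 1)) ` cbox 0 1)"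
    by (rule has_integral_affinity) (use assms in auto)
  also have "((\<lambda>x. (1 / (-1)) *\<^sub>R x + -((1 / (-1)) *\<^sub>R 1)) ` cbox 0 (1::real)) = {0..1}"
  proof -
    have "(\<lambda>x::real. (1 / (-1)) *\<^sub>R x + -((1 / (-1)) *\<^sub>R 1)) = (\<lambda>x. 1 - x)" by auto
    moreover have "(\<lambda>x::real. 1 - x) ` {0..1} = {0..1}"
      by (auto simp: image_iff intro!: bexI[of _ "1 - x" for x])
    ultimately show ?thesis by simp
  qed
  finally show ?thesis by (simp add: algebra_simps)
qed

lemma bint_swap: "t \<in> {0..1} \<Longrightarrow> bint p q (1 - t) = bint q p t"
  by (simp add: bint_def mult.commute)

lemma beta_real_case:
  assumes "p > 0" "q > 0"
  shows "integral {0..1} (bint (of_real p) (of_real q)) = Beta (of_real p) (of_real q)"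
proof -
  have "((\<lambda>t. complex_of_real (t powr (p - 1) * (1 - t) powr (q - 1))) has_integral of_real (Beta p q)) {0..1}"
    by (rule has_integral_of_real[OF has_integral_Beta_real]) (use assms in auto)
  then have "(bint (of_real p) (of_real q) has_integral of_real (Beta p q)) {0..1}"
  proof (rule has_integral_spike_finite[of "{}", rotated 2])
    fix t assume t: "t \<in> {0..1::real} - {}"
    have 1: "complex_of_real (t powr (p - 1)) = of_real t powr (of_real p - 1)"
      using powr_of_real[of t "p - 1"] t by simp
    have 2: "complex_of_real ((1 - t) powr (q - 1)) = of_real (1 - t) powr (of_real q - 1)"
      using powr_of_real[of "1 - t" "q - 1"] t by simp
    show "bint (of_real p) (of_real q) t = complex_of_real (t powr (p - 1) * (1 - t) powr (q - 1))"
      unfolding of_real_mult 1 2 bint_def ..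
  qed auto
  then show ?thesis by (simp add: integral_unique Beta_complex_of_real)
qed

theorem beta_complex:
  assumes p: "Re p > 0" and q: "Re q > 0"
  shows "(bint p q has_integral Beta p q) {0..1}"
proof -
  have ne: "z \<notin> \<int>\<^sub>\<le>\<^sub>0" if "Re z > 0" for z :: complex
    using that by (auto elim!: nonpos_Ints_cases)
  have step1: "integral {0..1} (bint p (of_real r)) = Beta p (of_real r)" if "r > 0" "Re p > 0" for r p
  proof (rule halfplane_eq[where f = "\<lambda>p. integral {0..1} (bint p (of_real r))" and g = "\<lambda>p. Beta p (of_real r)"])
    show "(\<lambda>p. integral {0..1} (bint p (of_real r))) holomorphic_on {p. 0 < Re p}"
      by (rule bint_holo_p) (use that in auto)
    show "(\<lambda>p. Beta p (of_real r)) holomorphic_on {p. 0 < Re p}"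
      by (intro holomorphic_intros) (use that ne in auto)
  qed (use that beta_real_case in auto)
  have step2: "integral {0..1} (bint q p) = Beta q p"
  proof (rule halfplane_eq[where f = "\<lambda>q. integral {0..1} (bint q p)" and g = "\<lambda>q. Beta q p", OF _ _ _ q])
    show "(\<lambda>q. integral {0..1} (bint q p)) holomorphic_on {p. 0 < Re p}"
      by (rule bint_holo_p) (use p in auto)
    show "(\<lambda>q. Beta q p) holomorphic_on {p. 0 < Re p}"
      by (intro holomorphic_intros) (use p ne in auto)
    fix r :: real assume r: "r > 0"
    have "bint p (of_real r) integrable_on {0..1}" by (rule bint_holo_p(2)) (use p r in auto)
    then have "((\<lambda>t. bint p (of_real r) (1 - t)) has_integral integral {0..1} (bint p (of_real r))) {0..1}"
      by (intro reflect01) auto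
    then have "(bint (of_real r) p has_integral integral {0..1} (bint p (of_real r))) {0..1}"
      by (rule has_integral_spike_finite[of "{}", rotated 2]) (auto simp: bint_swap)
    then have "integral {0..1} (bint (of_real r) p) = Beta p (of_real r)"
      using step1[OF r p] by (simp add: integral_unique)
    then show "integral {0..1} (bint (of_real r) p) = Beta (of_real r) p"
      by (simp add: Beta_commute)
  qed
  have "bint q p integrable_on {0..1}" by (rule bint_holo_p(2)) (use p q in auto)
  then have "(bint q p has_integral Beta q p) {0..1}"
    using step2 integrable_integral by metis
  then have "((\<lambda>t. bint q p (1 - t)) has_integral Beta q p) {0..1}" by (rule reflect01)
  then have "((\<lambda>t. bint q p (1 - t)) has_integral Beta p q) {0..1}" by (simp add: Beta_commute)
  then show ?thesis
    by (rule has_integral_spike_finite[of "{}", rotated 2]) (auto simp: bint_swap)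
qed


definition hcoef :: "complex \<Rightarrow> complex \<Rightarrow> complex \<Rightarrow> nat \<Rightarrow> complex" where
  "hcoef a b c n = pochhammer a n * pochhammer b n / (pochhammer c n * fact n)"

lemma hyp_series_def': "hyp_series a b c z = (\<Sum>n. hcoef a b c n * z ^ n)"
  by (simp add: hyp_series_def hcoef_def)

lemma nonpos_Int_add_nat: "c \<notin> \<int>\<^sub>\<le>\<^sub>0 \<Longrightarrow> c + of_nat n \<noteq> (0::complex)"
proof
  assume c: "c \<notin> \<int>\<^sub>\<le>\<^sub>0" and "c + of_nat n = 0"
  then have "c = - of_nat n" by (simp add: eq_neg_iff_add_eq_0)
  then have "c \<in> \<int>\<^sub>\<le>\<^sub>0" by simp
  with c show False by simp
qed

lemma pochhammer_nz: "c \<notin> \<int>\<^sub>\<le>\<^sub>0 \<Longrightarrow> pochhammer c n \<noteq> (0::complex)"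
  using pochhammer_eq_0_imp_nonpos_Int by blast

lemma hcoef_Suc:
  assumes c: "c \<notin> \<int>\<^sub>\<le>\<^sub>0"
  shows "hcoef a b c (Suc n) = hcoef a b c n * ((a + of_nat n) * (b + of_nat n) / ((c + of_nat n) * (of_nat n + 1)))"
  using pochhammer_nz[OF c, of n] nonpos_Int_add_nat[OF c, of n]
  by (simp add: hcoef_def pochhammer_Suc field_simps)

lemma hyp_abs_summable:
  assumes c: "c \<notin> \<int>\<^sub>\<le>\<^sub>0" and z: "norm z < 1"
  shows "summable (\<lambda>n. norm (hcoef a b c n * z ^ n))"
proof -
  define R where "R n = (norm a + real n) * (norm b + real n) / ((real n - norm c) * (real n + 1))" for n
  have "R \<longlonglongrightarrow> 1" unfolding R_def by real_asymp
  define q where "q = (1 + norm z) / 2"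
  have q: "q < 1" "norm z < q" using z by (auto simp: q_def)
  have "eventually (\<lambda>n. R n < q / norm z) sequentially" if "z \<noteq> 0"
  proof -
    have "1 < q / norm z" using q that by (simp add: field_simps)
    from order_tendstoD(2)[OF \<open>R \<longlonglongrightarrow> 1\<close> this] show ?thesis .
  qed
  then have ev: "eventually (\<lambda>n. R n * norm z \<le> q) sequentially"
  proof (cases "z = 0")
    case True then show ?thesis using q by (simp add: q_def)
  next
    case False
    then have "eventually (\<lambda>n. R n < q / norm z) sequentially" using \<open>z \<noteq> 0 \<Longrightarrow> _\<close> by blast
    then show ?thesis by eventually_elim (use False in \<open>simp add: field_simps\<close>)
  qed
  then obtain N0 where N0: "\<And>n. n \<ge> N0 \<Longrightarrow> R n * norm z \<le> q"
    by (auto simp: eventually_at_top_linorder)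
  define N where "N = max N0 (nat \<lceil>norm c\<rceil> + 1)"
  show ?thesis
  proof (rule summable_ratio_test[of q N])
    fix n assume n: "n \<ge> N"
    have nc: "real n > norm c" using n unfolding N_def by linarith
    have "norm (a + of_nat n) \<le> norm a + real n" using norm_triangle_ineq[of a "of_nat n"] by simp
    moreover have "norm (b + of_nat n) \<le> norm b + real n" using norm_triangle_ineq[of b "of_nat n"] by simp
    moreover have "norm (c + of_nat n) \<ge> real n - norm c"
      using norm_triangle_ineq2[of "of_nat n" "-c"] by (simp add: algebra_simps)
    moreover have "norm (of_nat n + 1 :: complex) = real n + 1"
      by (metis norm_of_nat of_nat_Suc add.commute)
    ultimately have "norm ((a + of_nat n) * (b + of_nat n) / ((c + of_nat n) * (of_nat n + 1))) \<le> R n"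
      unfolding R_def norm_mult norm_divide using nc
      by (intro frac_le mult_mono) (auto intro!: mult_pos_pos)
    moreover have "R n * norm z \<le> q" using N0 n unfolding N_def by auto
    ultimately have r: "norm ((a + of_nat n) * (b + of_nat n) / ((c + of_nat n) * (of_nat n + 1))) * norm z \<le> q"
      by (smt (verit) mult_right_mono norm_ge_zero)
    have "norm (norm (hcoef a b c (Suc n) * z ^ Suc n)) =
          norm (hcoef a b c n * z ^ n) * (norm ((a + of_nat n) * (b + of_nat n) / ((c + of_nat n) * (of_nat n + 1))) * norm z)"
      by (simp only: hcoef_Suc[OF c] real_norm_def abs_norm_cancel norm_mult power_Suc norm_power) (simp add: mult_ac)
    also have "\<dots> \<le> norm (hcoef a b c n * z ^ n) * q"
      by (rule mult_left_mono[OF r]) simp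
    finally show "norm (norm (hcoef a b c (Suc n) * z ^ Suc n)) \<le> q * norm (norm (hcoef a b c n * z ^ n))"
      by (simp add: mult_ac)
  qed (use q in auto)
qed

lemma hyp_summable:
  assumes "c \<notin> \<int>\<^sub>\<le>\<^sub>0" "norm z < 1"
  shows "summable (\<lambda>n. hcoef a b c n * z ^ n)"
  using summable_norm_cancel[OF hyp_abs_summable[OF assms]] .


definition eul :: "complex \<Rightarrow> complex \<Rightarrow> complex \<Rightarrow> complex \<Rightarrow> real \<Rightarrow> complex" where
  "eul A B C w t = bint B (C - B) t * (1 - of_real t * w) powr (-A)"

lemma slit_Re_Im: "z \<notin> \<real>\<^sub>\<le>\<^sub>0 \<Longrightarrow> Re z \<ge> 0 \<or> Im z \<noteq> 0"
  by (auto simp: complex_nonpos_Reals_iff)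

lemma cont_slit_pow:
  assumes X: "X \<subseteq> hyp_dom \<times> {0..1}"
  shows "continuous_on X (\<lambda>x. (1 - of_real (snd x) * fst x) powr s)"
proof (intro continuous_intros)
  have sl: "1 - complex_of_real (snd x) * fst x \<notin> \<real>\<^sub>\<le>\<^sub>0" if "x \<in> X" for x
  proof -
    have "fst x \<in> hyp_dom" "snd x \<in> {0..1}" using X that by auto
    then show ?thesis using one_minus_tw_slit[of "fst x" "snd x"] by auto
  qed
  show "X \<subseteq> {z. 0 \<le> Re (1 - complex_of_real (snd z) * fst z) \<or> Im (1 - complex_of_real (snd z) * fst z) \<noteq> 0}"
  proof
    fix x assume "x \<in> X"
    from slit_Re_Im[OF sl[OF this]] show "x \<in> {z. 0 \<le> Re (1 - complex_of_real (snd z) * fst z) \<or> Im (1 - complex_of_real (snd z) * fst z) \<noteq> 0}"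
      by simp
  qed
  show "Re s > 0" if "x \<in> X" "1 - complex_of_real (snd x) * fst x = 0" for x
  proof -
    have "(0::complex) \<in> \<real>\<^sub>\<le>\<^sub>0" by simp
    with sl[OF that(1)] that(2) show ?thesis by simp
  qed
qed

lemma cont_bint2:
  assumes X: "X \<subseteq> UNIV \<times> {0<..<1}"
  shows "continuous_on X (\<lambda>x. bint B C (snd x))"
  unfolding bint_def
proof (intro continuous_intros)
  have s: "0 < snd x" "snd x < 1" if "x \<in> X" for x using X that by auto
  show "X \<subseteq> {z. 0 \<le> Re (complex_of_real (snd z)) \<or> Im (complex_of_real (snd z)) \<noteq> 0}"
    using s by (auto simp: less_imp_le)
  show "X \<subseteq> {z. 0 \<le> Re (complex_of_real (1 - snd z)) \<or> Im (complex_of_real (1 - snd z)) \<noteq> 0}"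
    using s by (auto simp: less_imp_le)
  show "0 < Re (B - 1)" if "x \<in> X" "complex_of_real (snd x) = 0" for x
    using s[OF that(1)] that(2) by simp
  show "0 < Re (C - 1)" if "x \<in> X" "complex_of_real (1 - snd x) = 0" for x
    using s[OF that(1)] that(2) by simp
qed

lemma eul_holo:
  assumes B: "Re B > 0" and CB: "Re (C - B) > 0"
  shows "(\<lambda>w. integral {0..1} (eul A B C w)) holomorphic_on hyp_dom"
    and "w \<in> hyp_dom \<Longrightarrow> eul A B C w integrable_on {0..1}"
proof -
  define f' where "f' w t = bint B (C - B) t * (A * of_real t * (1 - of_real t * w) powr (-A-1))" for w t
  note * = param_holo[OF open_hyp_dom, of "eul A B C" f']
  have der: "((\<lambda>w. eul A B C w t) has_field_derivative f' w t) (at w)"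
    if w: "w \<in> hyp_dom" and t: "t \<in> {0<..<1}" for w t
  proof -
    have sl: "1 - of_real t * w \<notin> \<real>\<^sub>\<le>\<^sub>0" using one_minus_tw_slit[OF w] t by auto
    have d1: "((\<lambda>w. 1 - of_real t * w) has_field_derivative - of_real t) (at w)"
      by (auto intro!: derivative_eq_intros)
    have "((\<lambda>w. (1 - of_real t * w) powr (-A)) has_field_derivative
            ((-A) * (1 - of_real t * w) powr (-A - 1)) * (- of_real t)) (at w)"
      by (rule DERIV_chain2[OF has_field_derivative_powr[OF sl] d1])
    then have "((\<lambda>w. bint B (C - B) t * (1 - of_real t * w) powr (-A)) has_field_derivative
            bint B (C - B) t * (((-A) * (1 - of_real t * w) powr (-A - 1)) * (- of_real t))) (at w)"
      by (rule DERIV_cmult)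
    then show ?thesis by (simp add: eul_def[abs_def] f'_def algebra_simps)
  qed
  have contd: "continuous_on (hyp_dom \<times> {0<..<1}) (\<lambda>(w, t). f' w t)"
  proof -
    have "continuous_on (hyp_dom \<times> {0<..<1}) (\<lambda>x. bint B (C - B) (snd x) *
            (A * of_real (snd x) * (1 - of_real (snd x) * fst x) powr (-A-1)))"
      by (intro continuous_intros cont_bint2 cont_slit_pow) auto
    then show ?thesis by (simp add: f'_def case_prod_unfold)
  qed
  have contf: "continuous_on {0<..<1} (eul A B C w)" if w: "w \<in> hyp_dom" for w
  proof -
    have "continuous_on ({w} \<times> {0<..<1}) (\<lambda>x. bint B (C - B) (snd x) * (1 - of_real (snd x) * fst x) powr (-A))"
      by (intro continuous_intros cont_bint2 cont_slit_pow) (use w in auto)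
    then have "continuous_on ((\<lambda>t. (w, t)) ` {0<..<1}) (\<lambda>x. bint B (C - B) (snd x) * (1 - of_real (snd x) * fst x) powr (-A))"
      by (rule continuous_on_subset) auto
    then have "continuous_on {0<..<1} ((\<lambda>x. bint B (C - B) (snd x) * (1 - of_real (snd x) * fst x) powr (-A)) \<circ> (\<lambda>t. (w, t)))"
      by (rule continuous_on_compose[rotated]) (intro continuous_on_Pair continuous_on_const continuous_on_id)
    then show ?thesis by (simp add: o_def eul_def[abs_def])
  qed
  have dom: "\<exists>d>0. cball w0 d \<subseteq> hyp_dom \<and>
      (\<exists>h. h integrable_on {0..1} \<and> (\<forall>w\<in>cball w0 d. \<forall>t\<in>{0..1}. norm (eul A B C w t) \<le> h t))"
    if w0: "w0 \<in> hyp_dom" for w0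
  proof -
    obtain d where d: "d > 0" "cball w0 d \<subseteq> hyp_dom"
      using open_hyp_dom w0 open_contains_cball by blast
    have K: "compact (cball w0 d \<times> {0..1::real})" by (intro compact_Times) auto
    have "continuous_on (cball w0 d \<times> {0..1}) (\<lambda>x. (1 - of_real (snd x) * fst x) powr (-A))"
      by (rule cont_slit_pow) (use d in auto)
    from compact_imp_bounded[OF compact_continuous_image[OF this K]]
    obtain M where M: "M > 0" "\<And>x. x \<in> cball w0 d \<times> {0..1} \<Longrightarrow> norm ((1 - of_real (snd x) * fst x) powr (-A)) \<le> M"
      by (auto simp: bounded_pos)
    define h where "h t = M * (t powr (Re B - 1) * (1 - t) powr (Re (C - B) - 1))" for t
    have hi: "h integrable_on {0..1}" unfolding h_def
      by (intro integrable_on_mult_right integrable_Beta') (use B CB in auto)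
    have hb: "norm (eul A B C w t) \<le> h t" if "w \<in> cball w0 d" "t \<in> {0..1}" for w t
    proof -
      have "norm (eul A B C w t) = (t powr (Re B - 1) * (1 - t) powr (Re (C - B) - 1)) *
              norm ((1 - of_real t * w) powr (-A))"
        using that by (simp add: eul_def norm_mult norm_bint)
      also have "\<dots> \<le> (t powr (Re B - 1) * (1 - t) powr (Re (C - B) - 1)) * M"
        using M(2)[of "(w, t)"] that by (intro mult_left_mono) auto
      finally show ?thesis by (simp add: h_def mult_ac)
    qed
    show ?thesis using d hi hb by blast
  qed
  show "(\<lambda>w. integral {0..1} (eul A B C w)) holomorphic_on hyp_dom"
    by (rule *(1)) (use der contd contf dom in auto)
  show "w \<in> hyp_dom \<Longrightarrow> eul A B C w integrable_on {0..1}"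
    by (rule *(2)) (use der contd contf dom in auto)
qed


lemma Re_pos_not_nonpos_Int: "Re z > 0 \<Longrightarrow> (z::complex) \<notin> \<int>\<^sub>\<le>\<^sub>0"
  by (auto elim!: nonpos_Ints_cases)

lemma Beta_shift:
  assumes B: "B \<notin> \<int>\<^sub>\<le>\<^sub>0" and C: "C \<notin> \<int>\<^sub>\<le>\<^sub>0"
  shows "Beta (B + of_nat n) (C - B) = Beta B (C - B) * pochhammer B n / pochhammer C n"
proof -
  have g1: "Gamma B \<noteq> 0" "Gamma C \<noteq> 0" using B C by (auto simp: Gamma_eq_zero_iff)
  have "C + of_nat n \<notin> \<int>\<^sub>\<le>\<^sub>0"
  proof
    assume "C + of_nat n \<in> \<int>\<^sub>\<le>\<^sub>0"
    then obtain k where k: "C + of_nat n = of_int k" "k \<le> 0" by (auto elim!: nonpos_Ints_cases)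
    then have "C = of_int (k - int n)" by (simp add: algebra_simps)
    with k(2) have "C \<in> \<int>\<^sub>\<le>\<^sub>0" unfolding nonpos_Ints_def by (intro CollectI exI[of _ "k - int n"]) auto
    with C show False by simp
  qed
  then have g2: "Gamma (C + of_nat n) \<noteq> 0" by (simp add: Gamma_eq_zero_iff)
  show ?thesis
    using g1 g2 by (simp add: Beta_def pochhammer_Gamma[OF B] pochhammer_Gamma[OF C] field_simps)
qed

lemma hcoef_BB: "B \<notin> \<int>\<^sub>\<le>\<^sub>0 \<Longrightarrow> hcoef A B B n = pochhammer A n / fact n"
  using pochhammer_nz[of B n] by (simp add: hcoef_def)

lemma binom_expand:
  fixes A z :: complex
  assumes "norm z < 1"
  shows "(\<lambda>n. pochhammer A n / fact n * z ^ n) sums (1 - z) powr (-A)"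
proof -
  have "(\<lambda>n. ((-A) gchoose n) * (-z)^n) sums (1 + (-z)) powr (-A)"
    by (rule gen_binomial_complex) (use assms in simp)
  moreover have "((-A) gchoose n) * (-z)^n = pochhammer A n / fact n * z ^ n" for n
  proof -
    have "((-A) gchoose n) * (-z)^n = ((-1)^n * (-1)^n) * pochhammer A n / fact n * z ^ n"
      by (simp add: gbinomial_pochhammer power_minus[of z] field_simps)
    also have "(-1)^n * (-1)^n = (1::complex)" by (simp flip: power_add)
    finally show ?thesis by simp
  qed
  ultimately show ?thesis by simp
qed

lemma bint_shift:
  assumes "t \<ge> 0"
  shows "bint B D t * of_real t ^ n = bint (B + of_nat n) D t"
proof (cases "t = 0")
  case True then show ?thesis by (cases n) (auto simp: bint_def)
next
  case False
  with assms have t: "t > 0" by simp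
  have "complex_of_real t powr (B + of_nat n - 1) = of_real t powr ((B - 1) + of_nat n)"
    by (simp add: algebra_simps)
  also have "\<dots> = of_real t powr (B - 1) * of_real t powr (of_nat n)"
    by (rule powr_add)
  also have "complex_of_real t powr (of_nat n) = of_real t ^ n"
    using t by (intro powr_complexpow) simp
  finally have "complex_of_real t powr (B + of_nat n - 1) = of_real t powr (B - 1) * of_real t ^ n" .
  then show ?thesis by (simp add: bint_def mult_ac)
qed

theorem euler_disc:
  assumes B: "Re B > 0" and CB: "Re (C - B) > 0" and w: "norm w < 1"
  shows "(eul A B C w has_integral Beta B (C - B) * hyp_series A B C w) {0..1}"
proof -
  have Bn: "B \<notin> \<int>\<^sub>\<le>\<^sub>0" using B by (rule Re_pos_not_nonpos_Int)
  have Cn: "C \<notin> \<int>\<^sub>\<le>\<^sub>0" using B CB by (intro Re_pos_not_nonpos_Int) simp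
  define pc where "pc n = pochhammer A n / fact n" for n
  define f where "f N t = bint B (C - B) t * (\<Sum>n<N. pc n * (of_real t * w) ^ n)" for N t
  define y where "y N = (\<Sum>n<N. pc n * w ^ n * Beta (B + of_nat n) (C - B))" for N
  have fy: "(f N has_integral y N) {0..1}" for N
  proof -
    have "((\<lambda>t. \<Sum>n<N. pc n * w ^ n * bint (B + of_nat n) (C - B) t) has_integral y N) {0..1}"
      unfolding y_def
    proof (rule has_integral_sum)
      fix n assume "n \<in> {..<N}"
      have "(bint (B + of_nat n) (C - B) has_integral Beta (B + of_nat n) (C - B)) {0..1}"
        by (rule beta_complex) (use B CB in auto)
      then show "((\<lambda>t. pc n * w ^ n * bint (B + of_nat n) (C - B) t) has_integral
                   pc n * w ^ n * Beta (B + of_nat n) (C - B)) {0..1}"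
        by (rule has_integral_mult_right)
    qed auto
    moreover have "(\<Sum>n<N. pc n * w ^ n * bint (B + of_nat n) (C - B) t) = f N t" if "t \<in> {0..1}" for t
      unfolding f_def sum_distrib_left
      by (intro sum.cong refl) (use that in \<open>simp add: bint_shift[symmetric] power_mult_distrib mult_ac\<close>)
    ultimately show ?thesis
      using has_integral_cong[of "{0..1}" "\<lambda>t. \<Sum>n<N. pc n * w ^ n * bint (B + of_nat n) (C - B) t" "f N" "y N"]
      by simp
  qed
  define S where "S = (\<Sum>n. norm (pc n * w ^ n))"
  have sumS: "summable (\<lambda>n. norm (pc n * w ^ n))"
    using hyp_abs_summable[OF Bn w, of A B] by (simp add: hcoef_BB[OF Bn] pc_def)
  define h where "h t = S * (t powr (Re B - 1) * (1 - t) powr (Re (C - B) - 1))" for t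
  have hi: "h integrable_on {0..1}" unfolding h_def
    by (intro integrable_on_mult_right integrable_Beta') (use B CB in auto)
  have hb: "\<forall>t\<in>{0..1}. norm (f N t) \<le> h t" for N
  proof
    fix t :: real assume t: "t \<in> {0..1}"
    have "norm (\<Sum>n<N. pc n * (of_real t * w) ^ n) \<le> (\<Sum>n<N. norm (pc n * w ^ n))"
    proof (rule order.trans[OF norm_sum sum_mono])
      fix n assume "n \<in> {..<N}"
      have "norm (pc n * (of_real t * w) ^ n) = norm (pc n * w ^ n) * t ^ n"
        using t by (simp add: norm_mult norm_power power_mult_distrib)
      also have "\<dots> \<le> norm (pc n * w ^ n) * 1"
        using t by (intro mult_left_mono power_le_one) auto
      finally show "norm (pc n * (of_real t * w) ^ n) \<le> norm (pc n * w ^ n)" by simp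
    qed
    also have "\<dots> \<le> S" unfolding S_def
      by (rule sum_le_suminf[OF sumS]) auto
    finally have "norm (\<Sum>n<N. pc n * (of_real t * w) ^ n) \<le> S" .
    then have "norm (f N t) \<le> (t powr (Re B - 1) * (1 - t) powr (Re (C - B) - 1)) * S"
      unfolding f_def norm_mult using t by (simp add: norm_bint mult_left_mono)
    then show "norm (f N t) \<le> h t" by (simp add: h_def mult_ac)
  qed
  have lim: "\<forall>t\<in>{0..1}. (\<lambda>N. f N t) \<longlonglongrightarrow> eul A B C w t"
  proof
    fix t :: real assume t: "t \<in> {0..1}"
    have "norm (of_real t * w) < 1"
    proof -
      have "norm (of_real t * w) = t * norm w" using t by (simp add: norm_mult)
      also have "\<dots> \<le> norm w" using t by (intro mult_left_le_one_le) auto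
      finally show ?thesis using w by simp
    qed
    from binom_expand[OF this, of A] have "(\<lambda>n. pc n * (of_real t * w) ^ n) sums (1 - of_real t * w) powr (-A)"
      by (simp add: pc_def)
    then have "(\<lambda>N. \<Sum>n<N. pc n * (of_real t * w) ^ n) \<longlonglongrightarrow> (1 - of_real t * w) powr (-A)"
      by (simp add: sums_def)
    then show "(\<lambda>N. f N t) \<longlonglongrightarrow> eul A B C w t"
      unfolding f_def eul_def by (intro tendsto_intros)
  qed
  have ylim: "y \<longlonglongrightarrow> Beta B (C - B) * hyp_series A B C w"
  proof -
    have eq: "pc n * w ^ n * Beta (B + of_nat n) (C - B) = Beta B (C - B) * (hcoef A B C n * w ^ n)" for n
      using pochhammer_nz[OF Cn, of n] by (simp add: Beta_shift[OF Bn Cn] pc_def hcoef_def field_simps)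
    have "(\<lambda>n. hcoef A B C n * w ^ n) sums hyp_series A B C w"
      unfolding hyp_series_def' by (rule summable_sums[OF hyp_summable[OF Cn w]])
    then have "(\<lambda>n. Beta B (C - B) * (hcoef A B C n * w ^ n)) sums (Beta B (C - B) * hyp_series A B C w)"
      by (rule sums_mult)
    moreover have "y = (\<lambda>N. \<Sum>i<N. Beta B (C - B) * (hcoef A B C i * w ^ i))"
      by (simp add: y_def[abs_def] eq)
    ultimately show ?thesis by (simp add: sums_def)
  qed
  show ?thesis
    by (rule has_integral_dominated_convergence[OF fy hi hb lim ylim])
qed

theorem hypF_euler:
  assumes B: "Re B > 0" and CB: "Re (C - B) > 0" and w: "w \<in> hyp_dom"
  shows "hypF A B C w = integral {0..1} (eul A B C w) / Beta B (C - B)"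
proof (rule hypF_eqI[OF _ _ w])
  have Bn: "B \<notin> \<int>\<^sub>\<le>\<^sub>0" using B by (rule Re_pos_not_nonpos_Int)
  have CBn: "C - B \<notin> \<int>\<^sub>\<le>\<^sub>0" using CB by (rule Re_pos_not_nonpos_Int)
  have Cn: "C \<notin> \<int>\<^sub>\<le>\<^sub>0" using B CB by (intro Re_pos_not_nonpos_Int) simp
  have nz: "Beta B (C - B) \<noteq> 0"
    using Bn CBn Cn by (simp add: Beta_def Gamma_eq_zero_iff)
  show "(\<lambda>w. integral {0..1} (eul A B C w) / Beta B (C - B)) holomorphic_on hyp_dom"
    using nz by (intro holomorphic_intros eul_holo B CB)
  show "integral {0..1} (eul A B C v) / Beta B (C - B) = hyp_series A B C v" if "norm v < 1" for v
    using integral_unique[OF euler_disc[OF B CB that, of A]] nz by simp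
qed


lemma hcoef_cdown:
  assumes c: "c \<notin> \<int>\<^sub>\<le>\<^sub>0"
  shows "hcoef a b c n = hcoef a b (c + 1) n + of_nat n * hcoef a b (c + 1) n / c"
proof -
  have c0: "c \<noteq> 0" using c by auto
  have c1: "c + 1 \<notin> \<int>\<^sub>\<le>\<^sub>0"
  proof
    assume "c + 1 \<in> \<int>\<^sub>\<le>\<^sub>0"
    then obtain k where k: "c + 1 = of_int k" "k \<le> 0" by (auto elim!: nonpos_Ints_cases)
    then have "c = of_int (k - 1)" by (simp add: algebra_simps)
    with k(2) have "c \<in> \<int>\<^sub>\<le>\<^sub>0" unfolding nonpos_Ints_def by (intro CollectI exI[of _ "k - 1"]) auto
    with c show False by simp
  qed
  have rel: "pochhammer c n * (c + of_nat n) = c * pochhammer (c + 1) n"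
    using pochhammer_Suc[of c n] pochhammer_rec[of c n] by simp
  have p1: "pochhammer c n \<noteq> 0" "pochhammer (c + 1) n \<noteq> 0"
    using pochhammer_nz[OF c] pochhammer_nz[OF c1] by auto
  have cn: "c + of_nat n \<noteq> 0" by (rule nonpos_Int_add_nat[OF c])
  have pc: "pochhammer c n = c * pochhammer (c + 1) n / (c + of_nat n)"
    using rel cn by (simp add: field_simps)
  have "hcoef a b c n = hcoef a b (c + 1) n * ((c + of_nat n) / c)"
    unfolding hcoef_def pc using p1 c0 cn by (simp add: field_simps)
  also have "\<dots> = hcoef a b (c + 1) n + of_nat n * hcoef a b (c + 1) n / c"
    using c0 by (simp add: field_simps)
  finally show ?thesis .
qed

lemma not_nonpos_plus1: "c \<notin> \<int>\<^sub>\<le>\<^sub>0 \<Longrightarrow> c + 1 \<notin> (\<int>\<^sub>\<le>\<^sub>0 :: complex set)"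
proof
  assume c: "c \<notin> \<int>\<^sub>\<le>\<^sub>0" and "c + 1 \<in> \<int>\<^sub>\<le>\<^sub>0"
  then obtain k where k: "c + 1 = of_int k" "k \<le> 0" by (auto elim!: nonpos_Ints_cases)
  then have "c = of_int (k - 1)" by (simp add: algebra_simps)
  with k(2) have "c \<in> \<int>\<^sub>\<le>\<^sub>0" unfolding nonpos_Ints_def by (intro CollectI exI[of _ "k - 1"]) auto
  with c show False by simp
qed

lemma hyp_cdown:
  assumes c: "c \<notin> \<int>\<^sub>\<le>\<^sub>0"
      and g: "g holomorphic_on hyp_dom" "\<And>w. norm w < 1 \<Longrightarrow> g w = hyp_series a b (c + 1) w"
  shows "(\<lambda>w. g w + w * deriv g w / c) holomorphic_on hyp_dom"
    and "\<And>w. norm w < 1 \<Longrightarrow> g w + w * deriv g w / c = hyp_series a b c w"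
proof -
  have c0: "c \<noteq> 0" using c by auto
  have c1: "c + 1 \<notin> \<int>\<^sub>\<le>\<^sub>0" by (rule not_nonpos_plus1[OF c])
  show "(\<lambda>w. g w + w * deriv g w / c) holomorphic_on hyp_dom"
    using c0 g(1) open_hyp_dom by (intro holomorphic_intros) auto
  fix w :: complex assume w: "norm w < 1"
  define h where "h = hcoef a b (c + 1)"
  have sums1: "(\<lambda>n. h n * z ^ n) sums g z" if "norm z < 1" for z
    using summable_sums[OF hyp_summable[OF c1 that, of a b]] g(2)[OF that]
    by (simp add: h_def hyp_series_def')
  have wd: "w \<in> hyp_dom" using w ball_sub_hyp_dom by auto
  have "g field_differentiable (at w)"
    using holomorphic_on_imp_differentiable_at[OF g(1) open_hyp_dom wd] .
  then have der: "(g has_field_derivative deriv g w) (at w)"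
    by (simp add: DERIV_deriv_iff_field_differentiable)
  have "(\<lambda>n. diffs h n * w ^ n) sums deriv g w"
    by (rule termdiffs_sums_strong[OF sums1 der w])
  then have "(\<lambda>n. w * (diffs h n * w ^ n)) sums (w * deriv g w)"
    by (rule sums_mult)
  then have "(\<lambda>n. of_nat (Suc n) * h (Suc n) * w ^ Suc n) sums (w * deriv g w)"
    by (simp add: diffs_def mult_ac)
  then have s2: "(\<lambda>n. of_nat n * h n * w ^ n) sums (w * deriv g w)"
    using sums_Suc_iff[of "\<lambda>n. of_nat n * h n * w ^ n" "w * deriv g w"] by simp
  have "(\<lambda>n. h n * w ^ n + (of_nat n * h n * w ^ n) / c) sums (g w + w * deriv g w / c)"
    by (intro sums_add sums1 w sums_divide s2)
  moreover have "h n * w ^ n + (of_nat n * h n * w ^ n) / c = hcoef a b c n * w ^ n" for n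
    using hcoef_cdown[OF c, of a b n] by (simp add: h_def field_simps)
  ultimately have "(\<lambda>n. hcoef a b c n * w ^ n) sums (g w + w * deriv g w / c)" by simp
  then show "g w + w * deriv g w / c = hyp_series a b c w"
    by (simp add: hyp_series_def' sums_iff)
qed

lemma hyp_exists_aux:
  "\<forall>c. c \<notin> \<int>\<^sub>\<le>\<^sub>0 \<longrightarrow> Re c + real k > Re b \<longrightarrow> Re b > 0 \<longrightarrow>
     (\<exists>g. g holomorphic_on hyp_dom \<and> (\<forall>w. norm w < 1 \<longrightarrow> g w = hyp_series a b c w))"
proof (induction k)
  case 0
  show ?case
  proof (intro allI impI)
    fix c assume c: "c \<notin> \<int>\<^sub>\<le>\<^sub>0" "Re c + real 0 > Re b" "Re b > 0"
    have CB: "Re (c - b) > 0" using c by simp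
    have Bn: "b \<notin> \<int>\<^sub>\<le>\<^sub>0" using c(3) by (rule Re_pos_not_nonpos_Int)
    have CBn: "c - b \<notin> \<int>\<^sub>\<le>\<^sub>0" using CB by (rule Re_pos_not_nonpos_Int)
    have nz: "Beta b (c - b) \<noteq> 0"
      using Bn CBn c(1) by (simp add: Beta_def Gamma_eq_zero_iff)
    show "\<exists>g. g holomorphic_on hyp_dom \<and> (\<forall>w. norm w < 1 \<longrightarrow> g w = hyp_series a b c w)"
    proof (intro exI conjI allI impI)
      show "(\<lambda>w. integral {0..1} (eul a b c w) / Beta b (c - b)) holomorphic_on hyp_dom"
        using nz by (intro holomorphic_intros eul_holo c(3) CB)
      show "integral {0..1} (eul a b c w) / Beta b (c - b) = hyp_series a b c w" if "norm w < 1" for w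
        using integral_unique[OF euler_disc[OF c(3) CB that, of a]] nz by simp
    qed
  qed
next
  case (Suc k)
  show ?case
  proof (intro allI impI)
    fix c assume c: "c \<notin> \<int>\<^sub>\<le>\<^sub>0" "Re c + real (Suc k) > Re b" "Re b > 0"
    have "c + 1 \<notin> \<int>\<^sub>\<le>\<^sub>0" by (rule not_nonpos_plus1[OF c(1)])
    moreover have "Re (c + 1) + real k > Re b" using c(2) by simp
    ultimately obtain g where g: "g holomorphic_on hyp_dom" "\<And>w. norm w < 1 \<Longrightarrow> g w = hyp_series a b (c + 1) w"
      using Suc.IH c(3) by blast
    show "\<exists>g. g holomorphic_on hyp_dom \<and> (\<forall>w. norm w < 1 \<longrightarrow> g w = hyp_series a b c w)"
      using hyp_cdown[OF c(1) g] by blast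
  qed
qed

theorem hypF_disc:
  assumes b: "Re b > 0" and c: "c \<notin> \<int>\<^sub>\<le>\<^sub>0" and w: "norm w < 1"
  shows "hypF a b c w = hyp_series a b c w"
proof -
  obtain k :: nat where "real k > Re b - Re c" using reals_Archimedean2 by blast
  then have "Re c + real k > Re b" by simp
  then obtain g where g: "g holomorphic_on hyp_dom" "\<And>w. norm w < 1 \<Longrightarrow> g w = hyp_series a b c w"
    using hyp_exists_aux[where k=k and a=a and b=b] b c by blast
  show ?thesis by (rule hypF_series[OF g w])
qed


lemma cpowr_mult_pos:
  assumes "p \<ge> 0" "q \<ge> 0"
  shows "complex_of_real (p * q) powr s = of_real p powr s * of_real q powr s"
  using assms by (simp add: powr_times_real)

theorem part1:
  fixes a b \<mu> \<nu> :: complex and x z :: real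
  assumes mu: "Re \<mu> > 0" and nu: "Re \<nu> > 0" and x: "0 < x" and xz: "x < z"
  shows "((\<lambda>y::real. of_real (y - x) powr (\<mu> - 1) * of_real (z - y) powr (\<nu> - 1) * of_real y powr (a - b - \<mu>))
          has_integral (Gamma \<mu> * Gamma \<nu> / Gamma (\<mu> + \<nu>) * of_real (z - x) powr (\<mu> + \<nu> - 1)
            * of_real x powr (a - b - \<mu>) * hypF (b - a + \<mu>) \<mu> (\<mu> + \<nu>) (1 - of_real (z / x)))) {x..z}"
proof -
  define f where "f y = of_real (y - x) powr (\<mu> - 1) * of_real (z - y) powr (\<nu> - 1) * of_real y powr (a - b - \<mu>)" for y :: real
  define L where "L = z - x"
  have L: "L > 0" using xz by (simp add: L_def)
  define w0 where "w0 = 1 - complex_of_real (z / x)"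
  define A where "A = b - a + \<mu>"
  have w0: "w0 \<in> hyp_dom"
  proof -
    have "z / x > 0" using x xz by simp
    then show ?thesis by (simp add: hyp_dom_alt w0_def)
  qed
  have CB: "Re (\<mu> + \<nu> - \<mu>) > 0" using nu by simp
  have H: "hypF A \<mu> (\<mu> + \<nu>) w0 = integral {0..1} (eul A \<mu> (\<mu> + \<nu>) w0) / Beta \<mu> (\<mu> + \<nu> - \<mu>)"
    by (rule hypF_euler[OF mu CB w0])
  define I where "I = integral {0..1} (eul A \<mu> (\<mu> + \<nu>) w0)"
  have Bnz: "Beta \<mu> \<nu> \<noteq> 0"
  proof -
    have "\<mu> \<notin> \<int>\<^sub>\<le>\<^sub>0" "\<nu> \<notin> \<int>\<^sub>\<le>\<^sub>0" "\<mu> + \<nu> \<notin> \<int>\<^sub>\<le>\<^sub>0"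
      using mu nu by (auto intro!: Re_pos_not_nonpos_Int)
    then show ?thesis by (simp add: Beta_def Gamma_eq_zero_iff)
  qed
  have I: "I = Beta \<mu> \<nu> * hypF A \<mu> (\<mu> + \<nu>) w0" using H Bnz by (simp add: I_def)
  have eint: "(eul A \<mu> (\<mu> + \<nu>) w0 has_integral I) {0..1}"
    unfolding I_def using eul_holo(2)[OF mu CB w0] by (simp add: has_integral_integral)
  define K where "K = complex_of_real L powr (\<mu> + \<nu> - 2) * of_real x powr (a - b - \<mu>)"
  define G where "G t = f (x + t * L)" for t
  have GK: "G t = K * eul A \<mu> (\<mu> + \<nu>) w0 t" if t: "t \<in> {0<..<1}" for t
  proof -
    have e1: "complex_of_real (x + t * L - x) powr (\<mu> - 1) = of_real t powr (\<mu> - 1) * of_real L powr (\<mu> - 1)"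
      using t L by (simp add: cpowr_mult_pos[symmetric])
    have zz: "z - (x + t * L) = (1 - t) * L" by (simp add: L_def algebra_simps)
    have e2: "complex_of_real (z - (x + t * L)) powr (\<nu> - 1) = of_real (1 - t) powr (\<nu> - 1) * of_real L powr (\<nu> - 1)"
    proof -
      have "complex_of_real (z - (x + t * L)) powr (\<nu> - 1) = complex_of_real ((1 - t) * L) powr (\<nu> - 1)"
        by (simp only: zz)
      also have "\<dots> = of_real (1 - t) powr (\<nu> - 1) * of_real L powr (\<nu> - 1)"
        by (rule cpowr_mult_pos) (use t L in auto)
      finally show ?thesis .
    qed
    have "x + t * L = x * (1 - t * (1 - z / x))" using x by (simp add: L_def field_simps)
    moreover have "1 - t * (1 - z / x) \<ge> 0"
    proof -
      have "1 - z / x < 0" using x xz by (simp add: field_simps)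
      then show ?thesis using t by (smt (verit) mult_nonneg_nonpos greaterThanLessThan_iff)
    qed
    ultimately have "complex_of_real (x + t * L) powr (a - b - \<mu>) =
        of_real x powr (a - b - \<mu>) * of_real (1 - t * (1 - z / x)) powr (a - b - \<mu>)"
      using x by (simp add: cpowr_mult_pos[symmetric] del: of_real_diff of_real_mult)
    also have "complex_of_real (1 - t * (1 - z / x)) = 1 - of_real t * w0" by (simp add: w0_def)
    finally have e3: "complex_of_real (x + t * L) powr (a - b - \<mu>) = of_real x powr (a - b - \<mu>) * (1 - of_real t * w0) powr (a - b - \<mu>)" .
    have Aeq: "a - b - \<mu> = - A" by (simp add: A_def)
    have e4: "complex_of_real L powr (\<mu> - 1) * of_real L powr (\<nu> - 1) = of_real L powr (\<mu> + \<nu> - 2)"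
      by (simp add: powr_add[symmetric] algebra_simps)
    have "G t = (of_real t powr (\<mu> - 1) * of_real L powr (\<mu> - 1)) * (of_real (1 - t) powr (\<nu> - 1) * of_real L powr (\<nu> - 1))
                * (of_real x powr (a - b - \<mu>) * (1 - of_real t * w0) powr (a - b - \<mu>))"
      unfolding G_def f_def e1[symmetric] e2[symmetric] e3[symmetric] ..
    also have "\<dots> = (of_real L powr (\<mu> - 1) * of_real L powr (\<nu> - 1)) * of_real x powr (a - b - \<mu>) *
                 (of_real t powr (\<mu> - 1) * of_real (1 - t) powr (\<nu> - 1) * (1 - of_real t * w0) powr (a - b - \<mu>))"
      by (simp only: mult_ac)
    also have "\<dots> = K * eul A \<mu> (\<mu> + \<nu>) w0 t"
      unfolding e4 K_def eul_def bint_def Aeq by simp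
    finally show ?thesis .
  qed
  have "(G has_integral K * I) {0..1}"
  proof -
    have "((\<lambda>t. K * eul A \<mu> (\<mu> + \<nu>) w0 t) has_integral K * I) {0..1}"
      by (rule has_integral_mult_right[OF eint])
    then show ?thesis
      by (rule has_integral_spike_finite[of "{0,1}", rotated 2]) (use GK in auto)
  qed
  then have "(G has_integral K * I) (cbox 0 1)" by simp
  from has_integral_affinity'[OF this, of "1 / L" "- x / L"] L
  have A1: "((\<lambda>y. G ((1 / L) *\<^sub>R y + - x / L)) has_integral (K * I) /\<^sub>R (1 / L)) (cbox ((0 - - x / L) /\<^sub>R (1 / L)) ((1 - - x / L) /\<^sub>R (1 / L)))"
    by simp
  have C1: "cbox ((0 - - x / L) /\<^sub>R (1 / L)) ((1 - - x / L) /\<^sub>R (1 / L)) = {x..z}"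
    using L by (simp add: L_def field_simps)
  have G1: "(\<lambda>y. G ((1 / L) *\<^sub>R y + - x / L)) = f"
    unfolding G_def using L by (auto simp: field_simps)
  have V1: "(K * I) /\<^sub>R (1 / L) = Gamma \<mu> * Gamma \<nu> / Gamma (\<mu> + \<nu>) * of_real (z - x) powr (\<mu> + \<nu> - 1)
            * of_real x powr (a - b - \<mu>) * hypF (b - a + \<mu>) \<mu> (\<mu> + \<nu>) (1 - of_real (z / x))"
  proof -
    have "complex_of_real L powr (\<mu> + \<nu> - 1) = of_real L powr ((\<mu> + \<nu> - 2) + 1)" by (simp add: algebra_simps)
    also have "\<dots> = of_real L powr (\<mu> + \<nu> - 2) * of_real L" unfolding powr_add using L by simp
    finally have p: "complex_of_real L powr (\<mu> + \<nu> - 1) = of_real L powr (\<mu> + \<nu> - 2) * of_real L" .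
    show ?thesis
      unfolding I K_def scaleR_conv_of_real A_def[symmetric] w0_def[symmetric] L_def[symmetric] p
      by (simp add: Beta_def field_simps)
  qed
  from A1 have "(f has_integral Gamma \<mu> * Gamma \<nu> / Gamma (\<mu> + \<nu>) * of_real (z - x) powr (\<mu> + \<nu> - 1)
            * of_real x powr (a - b - \<mu>) * hypF (b - a + \<mu>) \<mu> (\<mu> + \<nu>) (1 - of_real (z / x))) {x..z}"
    unfolding C1 G1 V1 .
  then show ?thesis unfolding f_def .
qed


lemma abs_int_imp_integrable: "(f :: 'a::euclidean_space \<Rightarrow> 'b::euclidean_space) absolutely_integrable_on S \<Longrightarrow> f integrable_on S"
  by (simp add: absolutely_integrable_on_def)

lemma CV_complex:
  fixes F :: "real \<Rightarrow> complex" and g g' :: "real \<Rightarrow> real"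
  assumes S: "S \<in> sets lebesgue"
    and der: "\<And>x. x \<in> S \<Longrightarrow> (g has_field_derivative g' x) (at x within S)"
    and inj: "inj_on g S"
    and H: "(\<lambda>s. \<bar>g' s\<bar> *\<^sub>R F (g s)) absolutely_integrable_on S"
    and Hb: "integral S (\<lambda>s. \<bar>g' s\<bar> *\<^sub>R F (g s)) = b"
  shows "F absolutely_integrable_on (g ` S)" "integral (g ` S) F = b"
proof -
  define G where "G s = \<bar>g' s\<bar> *\<^sub>R F (g s)" for s
  have Gi: "G integrable_on S" using abs_int_imp_integrable[OF H] by (simp add: G_def[abs_def])
  have part: "(\<lambda>x. h (F x)) absolutely_integrable_on (g ` S) \<and> integral (g ` S) (\<lambda>x. h (F x)) = h b"
    if h: "bounded_linear h" "\<And>z r. h (r *\<^sub>R z) = r * h z" for h :: "complex \<Rightarrow> real"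
  proof -
    have e: "(\<lambda>s. h (G s)) = (\<lambda>s. \<bar>g' s\<bar> * h (F (g s)))" by (simp add: G_def h(2))
    have "(h \<circ> G) absolutely_integrable_on S"
      by (rule absolutely_integrable_linear[OF _ h(1)]) (use H in \<open>simp only: G_def[abs_def]\<close>)
    then have 1: "(\<lambda>s. \<bar>g' s\<bar> * h (F (g s))) absolutely_integrable_on S"
      unfolding o_def e .
    have "integral S (\<lambda>s. h (G s)) = h b"
      using integral_linear[OF Gi h(1)] Hb unfolding o_def G_def[abs_def] by simp
    then have 2: "integral S (\<lambda>s. \<bar>g' s\<bar> * h (F (g s))) = h b" unfolding e .
    show ?thesis
      by (rule has_absolute_integral_change_of_variables_1'[OF S der inj, THEN iffD1]) (simp, rule conjI[OF 1 2])
  qed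
  have "(\<lambda>x. Re (F x)) absolutely_integrable_on (g ` S) \<and> integral (g ` S) (\<lambda>x. Re (F x)) = Re b"
    by (rule part[OF bounded_linear_Re]) simp
  then have re: "(\<lambda>x. Re (F x)) absolutely_integrable_on (g ` S)" "integral (g ` S) (\<lambda>x. Re (F x)) = Re b"
    by blast+
  have "(\<lambda>x. Im (F x)) absolutely_integrable_on (g ` S) \<and> integral (g ` S) (\<lambda>x. Im (F x)) = Im b"
    by (rule part[OF bounded_linear_Im]) simp
  then have im: "(\<lambda>x. Im (F x)) absolutely_integrable_on (g ` S)" "integral (g ` S) (\<lambda>x. Im (F x)) = Im b"
    by blast+
  have eq: "F = (\<lambda>x. of_real (Re (F x)) + \<i> * of_real (Im (F x)))"
    by (auto simp: complex_eq_iff)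
  have a1: "(\<lambda>x. complex_of_real (Re (F x))) absolutely_integrable_on (g ` S)"
    using absolutely_integrable_linear[OF re(1) bounded_linear_of_real] by (simp add: o_def)
  have a2: "(\<lambda>x. \<i> * complex_of_real (Im (F x))) absolutely_integrable_on (g ` S)"
    using absolutely_integrable_linear[OF absolutely_integrable_linear[OF im(1) bounded_linear_of_real] bounded_linear_mult_right[of \<i>]]
    by (simp add: o_def)
  show "F absolutely_integrable_on (g ` S)"
  proof -
    have "(\<lambda>x. of_real (Re (F x)) + \<i> * of_real (Im (F x))) absolutely_integrable_on (g ` S)"
      by (rule set_integral_add(1)[OF a1 a2])
    then show ?thesis by (simp only: eq[symmetric])
  qed
  have i1: "integral (g ` S) (\<lambda>x. complex_of_real (Re (F x))) = of_real (Re b)"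
    using integral_linear[OF abs_int_imp_integrable[OF re(1)] bounded_linear_of_real] re(2) by (simp add: o_def)
  have j: "integral (g ` S) (\<lambda>x. complex_of_real (Im (F x))) = of_real (Im b)"
    using integral_linear[OF abs_int_imp_integrable[OF im(1)] bounded_linear_of_real] im(2) by (simp add: o_def)
  have i2: "integral (g ` S) (\<lambda>x. \<i> * complex_of_real (Im (F x))) = \<i> * of_real (Im b)"
    unfolding integral_mult_right j ..
  show "integral (g ` S) F = b"
  proof -
    have "integral (g ` S) F = integral (g ` S) (\<lambda>x. of_real (Re (F x)) + \<i> * of_real (Im (F x)))"
      by (rule arg_cong[OF eq])
    also have "\<dots> = of_real (Re b) + \<i> * of_real (Im b)"
      unfolding integral_add[OF abs_int_imp_integrable[OF a1] abs_int_imp_integrable[OF a2]] i1 i2 ..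
    also have "\<dots> = b" by (simp add: complex_eq_iff)
    finally show ?thesis .
  qed
qed


lemma bint_abs_int: "Re p > 0 \<Longrightarrow> Re q > 0 \<Longrightarrow> bint p q absolutely_integrable_on {0<..<1}"
  by (rule integrable_by_bound_Ioo(1)[OF cont_bint integrable_Beta'[of "Re p" "Re q"]])
     (auto simp: norm_bint)

lemma tail_beta:
  fixes y :: real and p q :: complex
  assumes y: "y > 0" and p: "Re p > 0" and q: "Re q > 0"
  shows "(\<lambda>z. of_real (z - y) powr (p - 1) * of_real z powr (-q - p)) absolutely_integrable_on {y<..}"
    and "integral {y<..} (\<lambda>z. of_real (z - y) powr (p - 1) * of_real z powr (-q - p)) = of_real y powr (-q) * Beta q p"
proof -
  define F where "F z = complex_of_real (z - y) powr (p - 1) * of_real z powr (-q - p)" for z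
  define g where "g s = y / s" for s :: real
  define g' where "g' s = - y / s^2" for s :: real
  define S where "S = {0<..<(1::real)}"
  have S: "S \<in> sets lebesgue" by (simp add: S_def)
  have der: "(g has_field_derivative g' s) (at s within S)" if "s \<in> S" for s
    using that unfolding g_def g'_def S_def
    by (auto intro!: derivative_eq_intros simp: power2_eq_square field_simps)
  have inj: "inj_on g S" unfolding g_def S_def inj_on_def using y by (auto simp: field_simps)
  have img: "g ` S = {y<..}"
  proof
    show "g ` S \<subseteq> {y<..}" unfolding g_def S_def using y by (auto simp: field_simps)
    show "{y<..} \<subseteq> g ` S"
    proof
      fix z assume z: "z \<in> {y<..}"
      then have "y / z \<in> S" "g (y / z) = z" using y by (auto simp: S_def g_def field_simps)
      then show "z \<in> g ` S" by (metis imageI)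
    qed
  qed
  have pt: "\<bar>g' s\<bar> *\<^sub>R F (g s) = of_real y powr (-q) * bint q p s" if s: "s \<in> S" for s
  proof -
    have s0: "0 < s" "s < 1" using s by (auto simp: S_def)
    have yy: "y / s - y > 0" using s0 y by (simp add: field_simps)
    have l1: "ln (y / s - y) = ln y + ln (1 - s) - ln s"
    proof -
      have "y / s - y = y * (1 - s) / s" using s0 by (simp add: field_simps)
      then show ?thesis using s0 y by (simp add: ln_div ln_mult)
    qed
    have l2: "ln (y / s) = ln y - ln s" using s0 y by (simp add: ln_div)
    have e2: "exp (2 * ln s) = s * s"
    proof -
      have "exp (2 * ln s) = exp (ln s + ln s)" by (simp only: mult_2)
      also have "\<dots> = exp (ln s) * exp (ln s)" by (rule exp_add)
      finally show ?thesis using s0 by simp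
    qed
    have ag: "\<bar>g' s\<bar> = exp (ln y - 2 * ln s)"
      using s0 y by (simp add: g'_def exp_diff e2 power2_eq_square)
    have f1: "complex_of_real (y / s - y) powr (p - 1) = exp ((p - 1) * of_real (ln y + ln (1 - s) - ln s))"
      by (subst cpowr_pos[OF yy]) (simp only: l1)
    have ys: "y / s > 0" using y s0 by simp
    have f2: "complex_of_real (y / s) powr (-q - p) = exp ((-q - p) * of_real (ln y - ln s))"
      by (subst cpowr_pos[OF ys]) (simp only: l2)
    have "\<bar>g' s\<bar> *\<^sub>R F (g s) = complex_of_real (exp (ln y - 2 * ln s)) *
            (exp ((p - 1) * of_real (ln y + ln (1 - s) - ln s)) * exp ((-q - p) * of_real (ln y - ln s)))"
      unfolding F_def g_def scaleR_conv_of_real ag f1 f2 ..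
    also have "\<dots> = exp (of_real (ln y - 2 * ln s) + (p - 1) * of_real (ln y + ln (1 - s) - ln s) +
                          (-q - p) * of_real (ln y - ln s))"
      by (simp add: exp_add exp_of_real del: of_real_diff of_real_add)
    also have "\<dots> = exp (-q * of_real (ln y) + (q - 1) * of_real (ln s) + (p - 1) * of_real (ln (1 - s)))"
      by (rule arg_cong[where f = exp]) (simp add: algebra_simps)
    also have "\<dots> = of_real y powr (-q) * bint q p s"
      unfolding bint_alt[OF s[unfolded S_def]] cpowr_pos[OF y] mult_exp_exp by (simp add: algebra_simps)
    finally show ?thesis .
  qed
  have ai: "(\<lambda>s. of_real y powr (-q) * bint q p s) absolutely_integrable_on S"
    unfolding S_def by (rule set_integrable_mult_right[OF bint_abs_int[OF q p]])
  have ii: "integral S (\<lambda>s. of_real y powr (-q) * bint q p s) = of_real y powr (-q) * Beta q p"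
  proof -
    have "(bint q p has_integral Beta q p) S"
      using beta_complex[OF q p] by (simp add: S_def has_integral_Icc_iff_Ioo)
    then show ?thesis by (simp add: integral_unique)
  qed
  have H: "(\<lambda>s. \<bar>g' s\<bar> *\<^sub>R F (g s)) absolutely_integrable_on S"
  proof -
    have i1: "(\<lambda>s. of_real y powr (-q) * bint q p s) integrable_on S"
         and i2: "(\<lambda>s. norm (of_real y powr (-q) * bint q p s)) integrable_on S"
      using ai unfolding absolutely_integrable_on_def by blast+
    have "(\<lambda>s. \<bar>g' s\<bar> *\<^sub>R F (g s)) integrable_on S"
      by (rule integrable_eq[OF i1]) (simp add: pt)
    moreover have "(\<lambda>s. norm (\<bar>g' s\<bar> *\<^sub>R F (g s))) integrable_on S"
      by (rule integrable_eq[OF i2]) (simp add: pt)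
    ultimately show ?thesis unfolding absolutely_integrable_on_def by blast
  qed
  have Hb: "integral S (\<lambda>s. \<bar>g' s\<bar> *\<^sub>R F (g s)) = of_real y powr (-q) * Beta q p"
    using ii integral_cong[of S "\<lambda>s. \<bar>g' s\<bar> *\<^sub>R F (g s)" "\<lambda>s. of_real y powr (-q) * bint q p s"] pt by simp
  from CV_complex[OF S der inj H Hb] img
  show "(\<lambda>z. of_real (z - y) powr (p - 1) * of_real z powr (-q - p)) absolutely_integrable_on {y<..}"
    and "integral {y<..} (\<lambda>z. of_real (z - y) powr (p - 1) * of_real z powr (-q - p)) = of_real y powr (-q) * Beta q p"
    by (simp_all add: F_def[abs_def])
qed


lemma HK2L:
  fixes f :: "real \<Rightarrow> complex"
  assumes ai: "f absolutely_integrable_on S" and S: "S \<in> sets borel"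
      and meas: "f \<in> borel_measurable borel"
  shows "set_integrable lborel S f" "(LINT x:S|lborel. f x) = integral S f"
proof -
  have m: "(\<lambda>x. indicator S x *\<^sub>R f x) \<in> borel_measurable lborel"
    using S meas by measurable
  have "integrable lebesgue (\<lambda>x. indicator S x *\<^sub>R f x)"
    using ai by (simp add: set_integrable_def)
  then show si: "set_integrable lborel S f"
    unfolding set_integrable_def using integrable_completion[OF m] by simp
  have "(LINT x:S|lebesgue. f x) = integral S f"
    by (rule set_lebesgue_integral_eq_integral(2)[OF ai])
  moreover have "(LINT x:S|lebesgue. f x) = (LINT x:S|lborel. f x)"
    unfolding set_lebesgue_integral_def by (rule integral_completion[OF m])
  ultimately show "(LINT x:S|lborel. f x) = integral S f" by simp
qed

definition tailf :: "real \<Rightarrow> complex \<Rightarrow> complex \<Rightarrow> real \<Rightarrow> complex" where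
  "tailf y p q z = of_real (z - y) powr (p - 1) * of_real z powr (-q - p)"

lemma tailf_meas [measurable]: "tailf y p q \<in> borel_measurable borel"
  unfolding tailf_def by measurable

lemma tail_beta_L:
  assumes y: "y > 0" and p: "Re p > 0" and q: "Re q > 0"
  shows "set_integrable lborel {y<..} (tailf y p q)"
    and "(LINT z:{y<..}|lborel. tailf y p q z) = of_real y powr (-q) * Beta q p"
proof -
  have ai: "tailf y p q absolutely_integrable_on {y<..}"
    using tail_beta(1)[OF y p q] by (simp add: tailf_def[abs_def])
  show "set_integrable lborel {y<..} (tailf y p q)" by (rule HK2L(1)[OF ai]) auto
  have "(LINT z:{y<..}|lborel. tailf y p q z) = integral {y<..} (tailf y p q)"
    by (rule HK2L(2)[OF ai]) auto
  also have "\<dots> = of_real y powr (-q) * Beta q p"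
    using tail_beta(2)[OF y p q] by (simp add: tailf_def[abs_def])
  finally show "(LINT z:{y<..}|lborel. tailf y p q z) = of_real y powr (-q) * Beta q p" .
qed

lemma tailf_real: "z > y \<Longrightarrow> y \<ge> 0 \<Longrightarrow>
   tailf y (of_real (Re p)) (of_real (Re q)) z = of_real ((z - y) powr (Re p - 1) * z powr (- Re q - Re p))"
proof -
  assume z: "z > y" and y: "y \<ge> 0"
  have h1: "complex_of_real (z - y) powr (complex_of_real (Re p) - 1) = of_real ((z - y) powr (Re p - 1))"
    using powr_of_real[of "z - y" "Re p - 1"] z y by simp
  have h2: "complex_of_real z powr (- complex_of_real (Re q) - complex_of_real (Re p)) = of_real (z powr (- Re q - Re p))"
    using powr_of_real[of z "- Re q - Re p"] z y by simp
  show ?thesis unfolding tailf_def h1 h2 of_real_mult ..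
qed

lemma norm_tailf: "z > y \<Longrightarrow> y \<ge> 0 \<Longrightarrow> norm (tailf y p q z) = (z - y) powr (Re p - 1) * z powr (- Re q - Re p)"
  by (simp add: tailf_def norm_mult norm_powr_real_powr)

lemma tail_beta_norm:
  assumes y: "y > 0" and p: "Re p > 0" and q: "Re q > 0"
  shows "set_integrable lborel {y<..} (\<lambda>z. norm (tailf y p q z))"
    and "(LINT z:{y<..}|lborel. norm (tailf y p q z)) = y powr (- Re q) * Beta (Re q) (Re p)"
proof -
  show "set_integrable lborel {y<..} (\<lambda>z. norm (tailf y p q z))"
    using tail_beta_L(1)[OF y p q] by (rule set_integrable_norm)
  have "(LINT z:{y<..}|lborel. tailf y (of_real (Re p)) (of_real (Re q)) z) =
        of_real y powr (- of_real (Re q)) * Beta (of_real (Re q)) (of_real (Re p))"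
    by (rule tail_beta_L(2)) (use y p q in auto)
  also have "\<dots> = of_real (y powr (- Re q) * Beta (Re q) (Re p))"
    using y by (simp add: powr_of_real[symmetric] Beta_complex_of_real)
  finally have A: "(LINT z:{y<..}|lborel. tailf y (of_real (Re p)) (of_real (Re q)) z) =
        of_real (y powr (- Re q) * Beta (Re q) (Re p))" .
  have "(LINT z:{y<..}|lborel. tailf y (of_real (Re p)) (of_real (Re q)) z) =
        (LINT z:{y<..}|lborel. complex_of_real (norm (tailf y p q z)))"
  proof (rule set_lebesgue_integral_cong)
    show "\<forall>z. z \<in> {y<..} \<longrightarrow> tailf y (of_real (Re p)) (of_real (Re q)) z = complex_of_real (norm (tailf y p q z))"
      using norm_tailf[of y _ p q] tailf_real[of y _ p q] y by simp
  qed auto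
  also have "\<dots> = of_real (LINT z:{y<..}|lborel. norm (tailf y p q z))"
  proof -
    have e: "\<And>x. indicat_real {y<..} x *\<^sub>R complex_of_real (norm (tailf y p q x)) =
               complex_of_real (indicat_real {y<..} x * norm (tailf y p q x))"
      by (simp add: scaleR_conv_of_real)
    show ?thesis unfolding set_lebesgue_integral_def e integral_complex_of_real by simp
  qed
  finally have "complex_of_real (LINT z:{y<..}|lborel. norm (tailf y p q z)) = of_real (y powr (- Re q) * Beta (Re q) (Re p))"
    using A by simp
  then show "(LINT z:{y<..}|lborel. norm (tailf y p q z)) = y powr (- Re q) * Beta (Re q) (Re p)"
    by (simp only: of_real_eq_iff)
qed


definition phi :: "real \<Rightarrow> complex \<Rightarrow> complex \<Rightarrow> complex \<Rightarrow> real \<Rightarrow> complex" where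
  "phi x \<mu> a b y = of_real (y - x) powr (\<mu> - 1) * of_real y powr (a - b - \<mu>)"

definition Psi :: "real \<Rightarrow> complex \<Rightarrow> complex \<Rightarrow> complex \<Rightarrow> complex \<Rightarrow> real \<Rightarrow> real \<Rightarrow> complex" where
  "Psi x \<mu> \<nu> a b y z = (if x < y \<and> y < z then phi x \<mu> a b y * tailf y \<nu> a z else 0)"

lemma Psi_meas: "(\<lambda>p. Psi x \<mu> \<nu> a b (fst p) (snd p)) \<in> borel_measurable (lborel \<Otimes>\<^sub>M lborel)"
  unfolding measurable_cong_sets[OF sets_pair_measure_cong[OF sets_lborel sets_lborel] refl]
  unfolding Psi_def phi_def tailf_def by measurable

lemma phi_tailf:
  assumes "y > x" "x > 0"
  shows "phi x \<mu> a b y * of_real y powr (-a) = tailf x \<mu> b y"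
proof -
  have "complex_of_real y powr (a - b - \<mu>) * of_real y powr (-a) = of_real y powr ((a - b - \<mu>) + (-a))"
    by (rule powr_add[symmetric])
  also have "(a - b - \<mu>) + (-a) = -b - \<mu>" by simp
  finally have "complex_of_real y powr (a - b - \<mu>) * of_real y powr (-a) = of_real y powr (-b - \<mu>)" .
  then show ?thesis unfolding phi_def tailf_def by (simp add: mult_ac)
qed

lemma norm_phi_tailf:
  assumes "y > x" "x > 0"
  shows "norm (phi x \<mu> a b y) * y powr (- Re a) = norm (tailf x \<mu> b y)"
proof -
  have "y powr (Re a - Re b - Re \<mu>) * y powr (- Re a) = y powr ((Re a - Re b - Re \<mu>) + (- Re a))"
    by (rule powr_add[symmetric])
  also have "(Re a - Re b - Re \<mu>) + (- Re a) = - Re b - Re \<mu>" by simp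
  finally have "y powr (Re a - Re b - Re \<mu>) * y powr (- Re a) = y powr (- Re b - Re \<mu>)" .
  then show ?thesis using assms unfolding phi_def
    by (simp add: norm_tailf norm_mult norm_powr_real_powr mult_ac)
qed

lemma Psi_inner_z:
  assumes x: "x > 0" and nu: "Re \<nu> > 0" and a: "Re a > 0"
  shows "integrable lborel (\<lambda>z. Psi x \<mu> \<nu> a b y z)"
    and "(\<integral>z. Psi x \<mu> \<nu> a b y z \<partial>lborel) = (if x < y then Beta a \<nu> * tailf x \<mu> b y else 0)"
    and "(\<integral>z. norm (Psi x \<mu> \<nu> a b y z) \<partial>lborel) = (if x < y then Beta (Re a) (Re \<nu>) * norm (tailf x \<mu> b y) else 0)"
proof -
  have "integrable lborel (\<lambda>z. Psi x \<mu> \<nu> a b y z) \<and>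
        (\<integral>z. Psi x \<mu> \<nu> a b y z \<partial>lborel) = (if x < y then Beta a \<nu> * tailf x \<mu> b y else 0) \<and>
        (\<integral>z. norm (Psi x \<mu> \<nu> a b y z) \<partial>lborel) = (if x < y then Beta (Re a) (Re \<nu>) * norm (tailf x \<mu> b y) else 0)"
  proof (cases "x < y")
    case False
    then have "Psi x \<mu> \<nu> a b y = (\<lambda>z. 0)" by (auto simp: Psi_def)
    then show ?thesis using False by simp
  next
    case True
    have y: "y > 0" using True x by simp
    have eq: "Psi x \<mu> \<nu> a b y = (\<lambda>z. phi x \<mu> a b y * (indicator {y<..} z *\<^sub>R tailf y \<nu> a z))"
      using True by (auto simp: Psi_def indicator_def fun_eq_iff)
    have eqn: "(\<lambda>z. norm (Psi x \<mu> \<nu> a b y z)) = (\<lambda>z. norm (phi x \<mu> a b y) * (indicator {y<..} z *\<^sub>R norm (tailf y \<nu> a z)))"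
      using True by (auto simp: Psi_def indicator_def fun_eq_iff norm_mult)
    have si: "integrable lborel (\<lambda>z. indicator {y<..} z *\<^sub>R tailf y \<nu> a z)"
      using tail_beta_L(1)[OF y nu a] by (simp add: set_integrable_def)
    have iv: "(\<integral>z. indicator {y<..} z *\<^sub>R tailf y \<nu> a z \<partial>lborel) = of_real y powr (-a) * Beta a \<nu>"
      using tail_beta_L(2)[OF y nu a] by (simp add: set_lebesgue_integral_def)
    have ivn: "(\<integral>z. indicator {y<..} z *\<^sub>R norm (tailf y \<nu> a z) \<partial>lborel) = y powr (- Re a) * Beta (Re a) (Re \<nu>)"
      using tail_beta_norm(2)[OF y nu a] by (simp add: set_lebesgue_integral_def)
    show ?thesis
    proof (intro conjI)
      show "integrable lborel (\<lambda>z. Psi x \<mu> \<nu> a b y z)"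
        unfolding eq by (intro integrable_mult_right si)
      show "(\<integral>z. Psi x \<mu> \<nu> a b y z \<partial>lborel) = (if x < y then Beta a \<nu> * tailf x \<mu> b y else 0)"
        unfolding eq integral_mult_right_zero iv using True phi_tailf[OF True x, of \<mu> a b]
        by (simp add: mult_ac)
      show "(\<integral>z. norm (Psi x \<mu> \<nu> a b y z) \<partial>lborel) = (if x < y then Beta (Re a) (Re \<nu>) * norm (tailf x \<mu> b y) else 0)"
        unfolding eqn integral_mult_right_zero ivn using True norm_phi_tailf[OF True x, of \<mu> a b]
        by (simp add: mult_ac)
    qed
  qed
  then show "integrable lborel (\<lambda>z. Psi x \<mu> \<nu> a b y z)"
    and "(\<integral>z. Psi x \<mu> \<nu> a b y z \<partial>lborel) = (if x < y then Beta a \<nu> * tailf x \<mu> b y else 0)"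
    and "(\<integral>z. norm (Psi x \<mu> \<nu> a b y z) \<partial>lborel) = (if x < y then Beta (Re a) (Re \<nu>) * norm (tailf x \<mu> b y) else 0)"
    by blast+
qed

theorem Psi_fubini:
  assumes x: "x > 0" and mu: "Re \<mu> > 0" and nu: "Re \<nu> > 0" and a: "Re a > 0" and b: "Re b > 0"
  shows "integrable (lborel \<Otimes>\<^sub>M lborel) (\<lambda>p. Psi x \<mu> \<nu> a b (fst p) (snd p))"
    and "(\<integral>z. (\<integral>y. Psi x \<mu> \<nu> a b y z \<partial>lborel) \<partial>lborel) = of_real x powr (-b) * Beta b \<mu> * Beta a \<nu>"
    and "(\<integral>y. (\<integral>z. norm (Psi x \<mu> \<nu> a b y z) \<partial>lborel) \<partial>lborel) = x powr (- Re b) * Beta (Re b) (Re \<mu>) * Beta (Re a) (Re \<nu>)"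
proof -
  have e1: "(\<lambda>y. \<integral>z. Psi x \<mu> \<nu> a b y z \<partial>lborel) = (\<lambda>y. Beta a \<nu> * (indicator {x<..} y *\<^sub>R tailf x \<mu> b y))"
    using Psi_inner_z(2)[OF x nu a] by (auto simp: indicator_def fun_eq_iff)
  have e2: "(\<lambda>y. \<integral>z. norm (Psi x \<mu> \<nu> a b y z) \<partial>lborel) = (\<lambda>y. Beta (Re a) (Re \<nu>) * (indicator {x<..} y *\<^sub>R norm (tailf x \<mu> b y)))"
    using Psi_inner_z(3)[OF x nu a] by (auto simp: indicator_def fun_eq_iff)
  have si: "integrable lborel (\<lambda>y. indicator {x<..} y *\<^sub>R tailf x \<mu> b y)"
    using tail_beta_L(1)[OF x mu b] by (simp add: set_integrable_def)
  have sin: "integrable lborel (\<lambda>y. indicator {x<..} y *\<^sub>R norm (tailf x \<mu> b y))"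
    using tail_beta_norm(1)[OF x mu b] by (simp add: set_integrable_def)
  show int: "integrable (lborel \<Otimes>\<^sub>M lborel) (\<lambda>p. Psi x \<mu> \<nu> a b (fst p) (snd p))"
  proof (rule lborel_pair.Fubini_integrable)
    show "(\<lambda>p. Psi x \<mu> \<nu> a b (fst p) (snd p)) \<in> borel_measurable (lborel \<Otimes>\<^sub>M lborel)"
      by (rule Psi_meas)
    show "integrable lborel (\<lambda>y. \<integral>z. norm (Psi x \<mu> \<nu> a b (fst (y, z)) (snd (y, z))) \<partial>lborel)"
      unfolding fst_conv snd_conv e2 by (intro integrable_mult_right sin)
    show "AE y in lborel. integrable lborel (\<lambda>z. Psi x \<mu> \<nu> a b (fst (y, z)) (snd (y, z)))"
      using Psi_inner_z(1)[OF x nu a] by simp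
  qed
  have "(\<integral>z. (\<integral>y. Psi x \<mu> \<nu> a b y z \<partial>lborel) \<partial>lborel) = (\<integral>y. (\<integral>z. Psi x \<mu> \<nu> a b y z \<partial>lborel) \<partial>lborel)"
    by (rule lborel_pair.Fubini_integral) (use int in \<open>simp add: case_prod_unfold\<close>)
  also have "\<dots> = Beta a \<nu> * (of_real x powr (-b) * Beta b \<mu>)"
    unfolding e1 integral_mult_right_zero using tail_beta_L(2)[OF x mu b] by (simp add: set_lebesgue_integral_def)
  finally show "(\<integral>z. (\<integral>y. Psi x \<mu> \<nu> a b y z \<partial>lborel) \<partial>lborel) = of_real x powr (-b) * Beta b \<mu> * Beta a \<nu>"
    by (simp add: mult_ac)
  show "(\<integral>y. (\<integral>z. norm (Psi x \<mu> \<nu> a b y z) \<partial>lborel) \<partial>lborel) = x powr (- Re b) * Beta (Re b) (Re \<mu>) * Beta (Re a) (Re \<nu>)"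
    unfolding e2 integral_mult_right_zero using tail_beta_norm(2)[OF x mu b] by (simp add: set_lebesgue_integral_def mult_ac)
qed


lemma hypF_holo:
  assumes b: "Re b > 0" and c: "c \<notin> \<int>\<^sub>\<le>\<^sub>0"
  shows "hypF a b c holomorphic_on hyp_dom"
proof -
  obtain k :: nat where "real k > Re b - Re c" using reals_Archimedean2 by blast
  then have "Re c + real k > Re b" by simp
  then have ex: "\<exists>g. g holomorphic_on hyp_dom \<and> (\<forall>w. norm w < 1 \<longrightarrow> g w = hyp_series a b c w)"
    using hyp_exists_aux[where k=k and a=a and b=b] b c by blast
  have "hypF a b c holomorphic_on hyp_dom \<and> (\<forall>w. norm w < 1 \<longrightarrow> hypF a b c w = hyp_series a b c w)"
    unfolding hypF_def by (rule someI_ex[OF ex])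
  then show ?thesis by blast
qed

lemma cpowr_minus_nat: "z > 0 \<Longrightarrow> complex_of_real z powr (- of_nat n) = inverse (of_real z) ^ n"
  by (simp add: powr_minus power_inverse)

lemma Psi_shift:
  assumes z: "z > 0"
  shows "Psi x \<mu> \<nu> (a + of_nat n) (b + of_nat n) y z = Psi x \<mu> \<nu> a b y z * inverse (of_real z) ^ n"
proof -
  have "phi x \<mu> (a + of_nat n) (b + of_nat n) y = phi x \<mu> a b y"
    unfolding phi_def by (simp add: algebra_simps)
  moreover have "tailf y \<nu> (a + of_nat n) z = tailf y \<nu> a z * inverse (of_real z) ^ n"
  proof -
    have "complex_of_real z powr (- (a + of_nat n) - \<nu>) = of_real z powr ((- a - \<nu>) + (- of_nat n))"
      by (simp add: algebra_simps)
    also have "\<dots> = of_real z powr (- a - \<nu>) * of_real z powr (- of_nat n)" by (rule powr_add)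
    also have "\<dots> = of_real z powr (- a - \<nu>) * inverse (of_real z) ^ n" using z by (simp add: cpowr_minus_nat)
    finally show ?thesis unfolding tailf_def by (simp add: mult_ac)
  qed
  ultimately show ?thesis unfolding Psi_def by simp
qed

definition P1 :: "real \<Rightarrow> real \<Rightarrow> complex \<Rightarrow> complex \<Rightarrow> complex \<Rightarrow> complex \<Rightarrow> real \<Rightarrow> complex" where
  "P1 x z \<mu> \<nu> a b y = of_real (y - x) powr (\<mu> - 1) * of_real (z - y) powr (\<nu> - 1) * of_real y powr (a - b - \<mu>)"

lemma Psi_P1:
  "Psi x \<mu> \<nu> a b y z = indicator {x<..<z} y *\<^sub>R (P1 x z \<mu> \<nu> a b y * of_real z powr (- a - \<nu>))"
  by (auto simp: Psi_def P1_def phi_def tailf_def indicator_def mult_ac)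

lemma G0_value:
  assumes x: "x > 0" and xz: "x < z" and mu: "Re \<mu> > 0" and nu: "Re \<nu> > 0"
      and int: "integrable lborel (\<lambda>y. Psi x \<mu> \<nu> a b y z)"
  shows "(\<integral>y. Psi x \<mu> \<nu> a b y z \<partial>lborel) = of_real z powr (- a - \<nu>) *
     (Gamma \<mu> * Gamma \<nu> / Gamma (\<mu> + \<nu>) * of_real (z - x) powr (\<mu> + \<nu> - 1)
            * of_real x powr (a - b - \<mu>) * hypF (b - a + \<mu>) \<mu> (\<mu> + \<nu>) (1 - of_real (z / x)))"
proof -
  define K where "K = complex_of_real z powr (- a - \<nu>)"
  have K: "K \<noteq> 0" using xz x by (simp add: K_def)
  define V where "V = Gamma \<mu> * Gamma \<nu> / Gamma (\<mu> + \<nu>) * of_real (z - x) powr (\<mu> + \<nu> - 1)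
            * of_real x powr (a - b - \<mu>) * hypF (b - a + \<mu>) \<mu> (\<mu> + \<nu>) (1 - of_real (z / x))"
  have eq: "(\<lambda>y. Psi x \<mu> \<nu> a b y z) = (\<lambda>y. K * (indicator {x<..<z} y *\<^sub>R P1 x z \<mu> \<nu> a b y))"
    by (auto simp: Psi_P1 K_def fun_eq_iff mult_ac)
  have "integrable lborel (\<lambda>y. inverse K * (K * (indicator {x<..<z} y *\<^sub>R P1 x z \<mu> \<nu> a b y)))"
    using int unfolding eq by (rule integrable_mult_right)
  then have si: "set_integrable lborel {x<..<z} (P1 x z \<mu> \<nu> a b)"
    using K by (simp add: set_integrable_def mult.assoc[symmetric])
  have "(\<integral>y. Psi x \<mu> \<nu> a b y z \<partial>lborel) = K * (LINT y:{x<..<z}|lborel. P1 x z \<mu> \<nu> a b y)"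
    unfolding eq integral_mult_right_zero set_lebesgue_integral_def ..
  also have "(LINT y:{x<..<z}|lborel. P1 x z \<mu> \<nu> a b y) = integral {x<..<z} (P1 x z \<mu> \<nu> a b)"
    by (rule set_borel_integral_eq_integral(2)[OF si])
  also have "\<dots> = V"
  proof -
    have "(P1 x z \<mu> \<nu> a b has_integral V) {x..z}"
      unfolding P1_def[abs_def] V_def by (rule part1[OF mu nu x xz])
    then have "(P1 x z \<mu> \<nu> a b has_integral V) {x<..<z}" by (simp add: has_integral_Icc_iff_Ioo)
    then show ?thesis by (rule integral_unique)
  qed
  finally show ?thesis by (simp add: K_def V_def)
qed


lemma Gamma_nz_Re: "Re z > 0 \<Longrightarrow> Gamma z \<noteq> 0"
  using Re_pos_not_nonpos_Int by (auto simp: Gamma_eq_zero_iff)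

lemma term_identity:
  fixes x :: real
  assumes x: "x > 0" and mu: "Re \<mu> > 0" and nu: "Re \<nu> > 0" and a: "Re a > 0" and b: "Re b > 0"
      and c: "c \<notin> \<int>\<^sub>\<le>\<^sub>0"
  shows "Gamma (a + \<nu>) * Gamma (b + \<mu>) / Gamma (\<nu> + \<mu>) *
        (hcoef (a + \<nu>) (b + \<mu>) c n * (of_real x powr (-(b + of_nat n)) * Beta (b + of_nat n) \<mu> * Beta (a + of_nat n) \<nu>))
        / (Beta \<mu> \<nu> * of_real x powr (a - b - \<mu>))
      = Gamma a * Gamma b * of_real x powr (- a + \<mu>) * (hcoef a b c n * inverse (of_real x) ^ n)"
proof -
  have X1: "complex_of_real x powr (-(b + of_nat n)) = of_real x powr (-b) * inverse (of_real x) ^ n"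
  proof -
    have "complex_of_real x powr (-(b + of_nat n)) = of_real x powr (-b + (- of_nat n))" by simp
    also have "\<dots> = of_real x powr (-b) * of_real x powr (- of_nat n)" by (rule powr_add)
    finally show ?thesis using x by (simp add: cpowr_minus_nat)
  qed
  have X2: "complex_of_real x powr (-b) = of_real x powr (- a + \<mu>) * of_real x powr (a - b - \<mu>)"
  proof -
    have "complex_of_real x powr (-b) = of_real x powr ((- a + \<mu>) + (a - b - \<mu>))" by simp
    also have "\<dots> = of_real x powr (- a + \<mu>) * of_real x powr (a - b - \<mu>)" by (rule powr_add)
    finally show ?thesis .
  qed
  have nz: "Gamma (a + \<nu>) \<noteq> 0" "Gamma (b + \<mu>) \<noteq> 0" "Gamma (\<nu> + \<mu>) \<noteq> 0" "Gamma \<mu> \<noteq> 0" "Gamma \<nu> \<noteq> 0"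
           "Gamma a \<noteq> 0" "Gamma b \<noteq> 0" "Gamma (a + of_nat n + \<nu>) \<noteq> 0" "Gamma (b + of_nat n + \<mu>) \<noteq> 0"
           "Gamma (a + of_nat n) \<noteq> 0" "Gamma (b + of_nat n) \<noteq> 0"
    using mu nu a b by (auto intro!: Gamma_nz_Re)
  have px: "complex_of_real x powr (a - b - \<mu>) \<noteq> 0" "complex_of_real x powr (- a + \<mu>) \<noteq> 0" using x by auto
  have pc: "pochhammer c n \<noteq> 0" by (rule pochhammer_nz[OF c])
  have nn: "a + \<nu> \<notin> \<int>\<^sub>\<le>\<^sub>0" "b + \<mu> \<notin> \<int>\<^sub>\<le>\<^sub>0" "a \<notin> \<int>\<^sub>\<le>\<^sub>0" "b \<notin> \<int>\<^sub>\<le>\<^sub>0"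
    using mu nu a b by (auto intro!: Re_pos_not_nonpos_Int)
  have e1: "a + \<nu> + of_nat n = a + of_nat n + \<nu>" "b + \<mu> + of_nat n = b + of_nat n + \<mu>" by (simp_all add: ac_simps)
  show ?thesis
    unfolding hcoef_def Beta_def X1 pochhammer_Gamma[OF nn(1)] pochhammer_Gamma[OF nn(2)]
      pochhammer_Gamma[OF nn(3)] pochhammer_Gamma[OF nn(4)] e1 X2
    using nz px pc by (simp add: field_simps add.commute)
qed


lemma Beta_real_pos: "p > 0 \<Longrightarrow> q > 0 \<Longrightarrow> Beta p (q::real) > 0"
  by (simp add: Beta_def Gamma_real_pos)

theorem part2:
  fixes x :: real and a b c \<mu> \<nu> :: complex
  assumes x1: "x > 1" and mu: "Re \<mu> > 0" and nu: "Re \<nu> > 0" and a: "Re a > 0" and b: "Re b > 0"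
      and c: "c \<notin> \<int>\<^sub>\<le>\<^sub>0"
  defines "I \<equiv> (\<lambda>z::real. of_real (z - x) powr (\<nu> + \<mu> - 1) * hypF (b - a + \<mu>) \<mu> (\<nu> + \<mu>) (1 - of_real (z / x)))"
  defines "g \<equiv> (\<lambda>z::real. I z * of_real z powr (- a - \<nu>) * hypF (a + \<nu>) (b + \<mu>) c (inverse (of_real z)))"
  shows "g integrable_on {x..} \<and>
         Gamma a * Gamma b * of_real x powr (- a + \<mu>) * hypF a b c (inverse (of_real x)) =
         Gamma (a + \<nu>) * Gamma (b + \<mu>) / Gamma (\<nu> + \<mu>) * integral {x..} g"
proof -
  have x: "x > 0" using x1 by simp
  have an: "Re (a + of_nat n) > 0" "Re (b + of_nat n) > 0" for n using a b by auto
  define h where "h n = hcoef (a + \<nu>) (b + \<mu>) c n" for n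
  define Q where "Q n y z = Psi x \<mu> \<nu> (a + of_nat n) (b + of_nat n) y z" for n y z
  define G0 where "G0 z = (\<integral>y. Psi x \<mu> \<nu> a b y z \<partial>lborel)" for z
  define f where "f n z = h n * (\<integral>y. Q n y z \<partial>lborel)" for n z
  have G0_out: "G0 z = 0" if "z \<le> x" for z
  proof -
    have "(\<lambda>y. Psi x \<mu> \<nu> a b y z) = (\<lambda>y. 0)" using that by (auto simp: Psi_def fun_eq_iff)
    then show ?thesis by (simp add: G0_def)
  qed
  have fG: "f n z = h n * inverse (of_real z) ^ n * G0 z" for n z
  proof (cases "z > x")
    case True
    then have "(\<lambda>y. Q n y z) = (\<lambda>y. Psi x \<mu> \<nu> a b y z * inverse (of_real z) ^ n)"
      using x by (auto simp: Q_def Psi_shift fun_eq_iff)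
    then show ?thesis by (simp add: f_def G0_def mult_ac)
  next
    case False
    then have "(\<lambda>y. Q n y z) = (\<lambda>y. 0)" by (auto simp: Q_def Psi_def fun_eq_iff)
    then show ?thesis using False G0_out[of z] by (simp add: f_def)
  qed
  have intQ: "integrable (lborel \<Otimes>\<^sub>M lborel) (case_prod (Q n))" for n
    using Psi_fubini(1)[OF x mu nu an(1)[of n] an(2)[of n]] by (simp add: Q_def case_prod_unfold)
  have intf: "integrable lborel (f n)" for n
    unfolding f_def[abs_def] by (intro integrable_mult_right lborel_pair.integrable_snd[OF intQ])
  have intf_val: "(\<integral>z. f n z \<partial>lborel) = h n * (of_real x powr (-(b + of_nat n)) * Beta (b + of_nat n) \<mu> * Beta (a + of_nat n) \<nu>)" for n
    unfolding f_def integral_mult_right_zero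
    using Psi_fubini(2)[OF x mu nu an(1)[of n] an(2)[of n]] by (simp add: Q_def)
  define C where "C = x powr (- Re b) * Beta (Re b) (Re \<mu>) * Beta (Re a) (Re \<nu>)"
  have normf_le: "(\<integral>z. norm (f n z) \<partial>lborel) \<le> norm (h n) * (inverse x ^ n * C)" for n
  proof -
    have intQn: "integrable (lborel \<Otimes>\<^sub>M lborel) (\<lambda>p. norm (Q n (fst p) (snd p)))"
      using integrable_norm[OF intQ[of n]] by (simp add: case_prod_unfold)
    have "(\<integral>z. norm (f n z) \<partial>lborel) = norm (h n) * (\<integral>z. norm (\<integral>y. Q n y z \<partial>lborel) \<partial>lborel)"
      unfolding f_def norm_mult by simp
    also have "(\<integral>z. norm (\<integral>y. Q n y z \<partial>lborel) \<partial>lborel) \<le> (\<integral>z. (\<integral>y. norm (Q n y z) \<partial>lborel) \<partial>lborel)"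
    proof (rule integral_mono)
      show "integrable lborel (\<lambda>z. norm (\<integral>y. Q n y z \<partial>lborel))"
        by (intro integrable_norm lborel_pair.integrable_snd[OF intQ])
      show "integrable lborel (\<lambda>z. \<integral>y. norm (Q n y z) \<partial>lborel)"
        using lborel_pair.integrable_snd[of "\<lambda>y z. norm (Q n y z)"] intQn by (simp add: case_prod_unfold)
      show "norm (\<integral>y. Q n y z \<partial>lborel) \<le> (\<integral>y. norm (Q n y z) \<partial>lborel)" for z
        by (rule integral_norm_bound)
    qed
    also have "(\<integral>z. (\<integral>y. norm (Q n y z) \<partial>lborel) \<partial>lborel) = (\<integral>y. (\<integral>z. norm (Q n y z) \<partial>lborel) \<partial>lborel)"
      by (rule lborel_pair.Fubini_integral) (use intQn in \<open>simp add: case_prod_unfold\<close>)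
    also have "\<dots> = x powr (- Re (b + of_nat n)) * Beta (Re (b + of_nat n)) (Re \<mu>) * Beta (Re (a + of_nat n)) (Re \<nu>)"
      using Psi_fubini(3)[OF x mu nu an(1)[of n] an(2)[of n]] by (simp add: Q_def)
    also have "\<dots> \<le> inverse x ^ n * C"
    proof -
      have xp: "x powr (- Re (b + of_nat n)) = x powr (- Re b) * inverse x ^ n"
        using x by (simp add: powr_diff powr_realpow powr_minus divide_inverse power_inverse)
      have b1: "Beta (Re b + real n) (Re \<mu>) \<le> Beta (Re b) (Re \<mu>)"
        by (rule Beta_real_mono) (use b mu in auto)
      have b2: "Beta (Re a + real n) (Re \<nu>) \<le> Beta (Re a) (Re \<nu>)"
        by (rule Beta_real_mono) (use a nu in auto)
      have pos: "Beta (Re b + real n) (Re \<mu>) > 0" "Beta (Re a + real n) (Re \<nu>) > 0" "x powr (- Re b) * inverse x ^ n > 0"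
        using a b mu nu x by (auto intro!: Beta_real_pos add_pos_nonneg)
      have "Beta (Re b + real n) (Re \<mu>) * Beta (Re a + real n) (Re \<nu>) \<le> Beta (Re b) (Re \<mu>) * Beta (Re a) (Re \<nu>)"
        using b1 b2 pos by (intro mult_mono) auto
      then have "(x powr (- Re b) * inverse x ^ n) * (Beta (Re b + real n) (Re \<mu>) * Beta (Re a + real n) (Re \<nu>))
                 \<le> (x powr (- Re b) * inverse x ^ n) * (Beta (Re b) (Re \<mu>) * Beta (Re a) (Re \<nu>))"
        using pos by (intro mult_left_mono) auto
      then show ?thesis unfolding xp C_def by (simp add: mult_ac)
    qed
    finally show ?thesis by (simp add: mult_left_mono)
  qed
  have wx: "norm (inverse (complex_of_real x)) < 1" using x1 by (simp add: norm_inverse inverse_less_1_iff)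
  have sumh: "summable (\<lambda>n. norm (h n * inverse (complex_of_real x) ^ n))"
    unfolding h_def by (rule hyp_abs_summable[OF c wx])
  have sumb: "summable (\<lambda>n. norm (h n) * (inverse x ^ n * C))"
  proof -
    have "summable (\<lambda>n. norm (h n * inverse (complex_of_real x) ^ n) * C)"
      by (rule summable_mult2[OF sumh])
    moreover have "norm (h n * inverse (complex_of_real x) ^ n) * C = norm (h n) * (inverse x ^ n * C)" for n
      using x by (simp add: norm_mult norm_power norm_inverse)
    ultimately show ?thesis by simp
  qed
  have sum_int: "summable (\<lambda>n. \<integral>z. norm (f n z) \<partial>lborel)"
    by (rule summable_comparison_test[OF _ sumb]) (use normf_le in \<open>auto intro!: exI[of _ 0]\<close>)
  have AEsum: "AE z in lborel. summable (\<lambda>n. norm (f n z))"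
  proof (rule AE_I2)
    fix z :: real
    show "summable (\<lambda>n. norm (f n z))"
    proof (cases "z > x")
      case True
      have wz: "norm (inverse (complex_of_real z)) < 1" using True x1 by (simp add: norm_inverse inverse_less_1_iff)
      have "summable (\<lambda>n. norm (h n * inverse (complex_of_real z) ^ n) * norm (G0 z))"
        unfolding h_def by (rule summable_mult2[OF hyp_abs_summable[OF c wz]])
      then show ?thesis by (simp add: fG norm_mult mult_ac)
    next
      case False
      then show ?thesis by (simp add: fG G0_out)
    qed
  qed
  have int_sum: "integrable lborel (\<lambda>z. \<Sum>n. f n z)"
    by (rule integrable_suminf[OF intf AEsum sum_int])
  have sums_int: "(\<lambda>n. \<integral>z. f n z \<partial>lborel) sums (\<integral>z. (\<Sum>n. f n z) \<partial>lborel)"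
    by (rule sums_integral[OF intf AEsum sum_int])
  define Cst where "Cst = Beta \<mu> \<nu> * of_real x powr (a - b - \<mu>)"
  have nnmu: "\<mu> \<notin> \<int>\<^sub>\<le>\<^sub>0" "\<nu> \<notin> \<int>\<^sub>\<le>\<^sub>0" "\<mu> + \<nu> \<notin> \<int>\<^sub>\<le>\<^sub>0" "\<nu> + \<mu> \<notin> \<int>\<^sub>\<le>\<^sub>0"
    using mu nu by (auto intro!: Re_pos_not_nonpos_Int)
  have Cst: "Cst \<noteq> 0" using nnmu x by (simp add: Cst_def Beta_def Gamma_eq_zero_iff)
  have AEeq: "AE z in lborel. (\<Sum>n. f n z) = Cst * (indicator {x<..} z *\<^sub>R g z)"
  proof -
    have "integrable (lborel \<Otimes>\<^sub>M lborel) (case_prod (\<lambda>y z. Psi x \<mu> \<nu> a b y z))"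
      using Psi_fubini(1)[OF x mu nu a b] by (simp add: case_prod_unfold)
    from lborel_pair.AE_integrable_snd[OF this]
    have "AE z in lborel. integrable lborel (\<lambda>y. Psi x \<mu> \<nu> a b y z)" .
    then show ?thesis
    proof (rule eventually_mono)
      fix z assume iz: "integrable lborel (\<lambda>y. Psi x \<mu> \<nu> a b y z)"
      show "(\<Sum>n. f n z) = Cst * (indicator {x<..} z *\<^sub>R g z)"
      proof (cases "z > x")
        case False
        then show ?thesis by (simp add: fG G0_out)
      next
        case True
        have wz: "norm (inverse (complex_of_real z)) < 1" using True x1 by (simp add: norm_inverse inverse_less_1_iff)
        have "(\<Sum>n. f n z) = (\<Sum>n. h n * inverse (complex_of_real z) ^ n) * G0 z"
          unfolding fG by (rule suminf_mult2[symmetric]) (unfold h_def, rule hyp_summable[OF c wz])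
        also have "(\<Sum>n. h n * inverse (complex_of_real z) ^ n) = hypF (a + \<nu>) (b + \<mu>) c (inverse (of_real z))"
          using hypF_disc[of "b + \<mu>" c "inverse (of_real z)" "a + \<nu>"] b mu c wz
          by (simp add: h_def hyp_series_def')
        also have "G0 z = of_real z powr (- a - \<nu>) *
             (Gamma \<mu> * Gamma \<nu> / Gamma (\<mu> + \<nu>) * of_real (z - x) powr (\<mu> + \<nu> - 1)
            * of_real x powr (a - b - \<mu>) * hypF (b - a + \<mu>) \<mu> (\<mu> + \<nu>) (1 - of_real (z / x)))"
          unfolding G0_def by (rule G0_value[OF x True mu nu iz])
        finally show ?thesis using True
          by (simp add: g_def I_def Cst_def Beta_def add.commute[of \<nu> \<mu>] mult_ac)
      qed
    qed
  qed
  have contg: "continuous_on {x<..} g"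
  proof -
    have h1: "hypF (b - a + \<mu>) \<mu> (\<nu> + \<mu>) holomorphic_on hyp_dom"
      by (rule hypF_holo) (use mu nnmu in auto)
    have h2: "hypF (a + \<nu>) (b + \<mu>) c holomorphic_on hyp_dom"
      by (rule hypF_holo) (use mu b c in auto)
    have c1: "continuous_on {x<..} (\<lambda>z. hypF (b - a + \<mu>) \<mu> (\<nu> + \<mu>) (1 - of_real (z / x)))"
    proof (rule continuous_on_compose2[OF holomorphic_on_imp_continuous_on[OF h1]])
      show "continuous_on {x<..} (\<lambda>z. 1 - complex_of_real (z / x))" using x by (intro continuous_intros) auto
      show "(\<lambda>z. 1 - complex_of_real (z / x)) ` {x<..} \<subseteq> hyp_dom"
        using x by (auto simp: hyp_dom_alt field_simps)
    qed
    have c2: "continuous_on {x<..} (\<lambda>z. hypF (a + \<nu>) (b + \<mu>) c (inverse (of_real z)))"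
    proof (rule continuous_on_compose2[OF holomorphic_on_imp_continuous_on[OF h2]])
      show "continuous_on {x<..} (\<lambda>z. inverse (complex_of_real z))" using x by (intro continuous_intros) auto
      show "(\<lambda>z. inverse (complex_of_real z)) ` {x<..} \<subseteq> hyp_dom"
      proof
        fix w assume "w \<in> (\<lambda>z. inverse (complex_of_real z)) ` {x<..}"
        then obtain z where z: "z > x" "w = inverse (complex_of_real z)" by auto
        then have "norm w < 1" using x1 by (simp add: norm_inverse inverse_less_1_iff)
        then show "w \<in> hyp_dom" using ball_sub_hyp_dom by auto
      qed
    qed
    have c3: "continuous_on {x<..} (\<lambda>z. complex_of_real (z - x) powr (\<nu> + \<mu> - 1))"
      by (intro continuous_intros) auto
    have c4: "continuous_on {x<..} (\<lambda>z. complex_of_real z powr (- a - \<nu>))"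
      using x by (intro continuous_intros) auto
    show ?thesis unfolding g_def I_def by (intro continuous_intros c1 c2 c3 c4)
  qed
  have measg: "(\<lambda>z. Cst * (indicator {x<..} z *\<^sub>R g z)) \<in> borel_measurable lborel"
  proof -
    have m1: "(\<lambda>z. indicator {x<..} z *\<^sub>R g z) \<in> borel_measurable borel"
      by (rule borel_measurable_continuous_on_indicator[OF _ contg]) auto
    have "(\<lambda>z. Cst * (indicator {x<..} z *\<^sub>R g z)) \<in> borel_measurable borel"
      by (intro borel_measurable_times borel_measurable_const m1)
    then show ?thesis by simp
  qed
  have int_g: "integrable lborel (\<lambda>z. Cst * (indicator {x<..} z *\<^sub>R g z))"
    using integrable_cong_AE[OF borel_measurable_integrable[OF int_sum] measg AEeq] int_sum by simp
  have "integrable lborel (\<lambda>z. inverse Cst * (Cst * (indicator {x<..} z *\<^sub>R g z)))"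
    by (rule integrable_mult_right[OF int_g])
  then have sig: "set_integrable lborel {x<..} g"
    using Cst by (simp add: set_integrable_def mult.assoc[symmetric])
  have "(\<integral>z. (\<Sum>n. f n z) \<partial>lborel) = (\<integral>z. Cst * (indicator {x<..} z *\<^sub>R g z) \<partial>lborel)"
    by (rule integral_cong_AE[OF borel_measurable_integrable[OF int_sum] measg AEeq])
  also have "\<dots> = Cst * (LINT z:{x<..}|lborel. g z)"
    unfolding integral_mult_right_zero set_lebesgue_integral_def ..
  also have "(LINT z:{x<..}|lborel. g z) = integral {x<..} g"
    by (rule set_borel_integral_eq_integral(2)[OF sig])
  finally have intval: "(\<integral>z. (\<Sum>n. f n z) \<partial>lborel) = Cst * integral {x<..} g" .
  have gi: "g integrable_on {x<..}" by (rule set_borel_integral_eq_integral(1)[OF sig])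
  have negl: "negligible {t \<in> {x<..} - {x..}. g t \<noteq> 0}" "negligible {t \<in> {x..} - {x<..}. g t \<noteq> 0}"
    by (auto intro: negligible_subset[of "{x}"])
  have "(g has_integral integral {x<..} g) {x<..}" using gi by (simp add: has_integral_integral)
  then have gx: "(g has_integral integral {x<..} g) {x..}"
    using has_integral_spike_set_eq[OF negl] by blast
  show ?thesis
  proof
    show "g integrable_on {x..}" using gx by blast
    have ig: "integral {x..} g = integral {x<..} g" using gx by (simp add: integral_unique)
    define K where "K = Gamma (a + \<nu>) * Gamma (b + \<mu>) / Gamma (\<nu> + \<mu>)"
    have s1: "(\<lambda>n. K * (\<integral>z. f n z \<partial>lborel) / Cst) sums (K * (Cst * integral {x<..} g) / Cst)"
      using sums_divide[OF sums_mult[OF sums_int, of K], of Cst] intval by simp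
    have s2: "(\<lambda>n. Gamma a * Gamma b * of_real x powr (- a + \<mu>) * (hcoef a b c n * inverse (of_real x) ^ n))
               sums (Gamma a * Gamma b * of_real x powr (- a + \<mu>) * hyp_series a b c (inverse (of_real x)))"
      unfolding hyp_series_def' by (intro sums_mult summable_sums hyp_summable[OF c wx])
    have "K * (\<integral>z. f n z \<partial>lborel) / Cst = Gamma a * Gamma b * of_real x powr (- a + \<mu>) * (hcoef a b c n * inverse (of_real x) ^ n)" for n
      unfolding intf_val K_def Cst_def h_def using term_identity[OF x mu nu a b c, of n] by (simp add: mult_ac)
    with s1 have s1': "(\<lambda>n. Gamma a * Gamma b * of_real x powr (- a + \<mu>) * (hcoef a b c n * inverse (of_real x) ^ n))
               sums (K * (Cst * integral {x<..} g) / Cst)" by simp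
    have "Gamma a * Gamma b * of_real x powr (- a + \<mu>) * hyp_series a b c (inverse (of_real x)) = K * (Cst * integral {x<..} g) / Cst"
      using sums_unique2[OF s2 s1'] .
    also have "\<dots> = K * integral {x..} g" using Cst ig by simp
    also have "hyp_series a b c (inverse (of_real x)) = hypF a b c (inverse (of_real x))"
      using hypF_disc[OF b c wx] by simp
    finally show "Gamma a * Gamma b * of_real x powr (- a + \<mu>) * hypF a b c (inverse (of_real x)) =
         Gamma (a + \<nu>) * Gamma (b + \<mu>) / Gamma (\<nu> + \<mu>) * integral {x..} g"
      by (simp add: K_def)
  qed
qed

theorem lemma3:
  shows
  "(\<forall>(a::complex) (b::complex) (\<mu>::complex) (\<nu>::complex) (x::real) (z::real).
      Re \<mu> > 0 \<and> Re \<nu> > 0 \<and> 0 < x \<and> x < z \<longrightarrow>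
      (let f = (\<lambda>y::real. of_real (y - x) powr (\<mu> - 1) * of_real (z - y) powr (\<nu> - 1)
                            * of_real y powr (a - b - \<mu>))
       in f integrable_on {x..z} \<and>
          integral {x..z} f =
            Gamma \<mu> * Gamma \<nu> / Gamma (\<mu> + \<nu>) * of_real (z - x) powr (\<mu> + \<nu> - 1)
            * of_real x powr (a - b - \<mu>)
            * hypF (b - a + \<mu>) \<mu> (\<mu> + \<nu>) (1 - of_real (z / x))))
   \<and>
   (\<forall>(x::real) (a::complex) (b::complex) (c::complex) (\<mu>::complex) (\<nu>::complex).
      x > 1 \<and> Re \<mu> > 0 \<and> Re \<nu> > 0 \<and> Re a > 0 \<and> Re b > 0 \<and> c \<notin> \<int>\<^sub>\<le>\<^sub>0 \<longrightarrow>
      (let I = (\<lambda>z::real. of_real (z - x) powr (\<nu> + \<mu> - 1)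
                            * hypF (b - a + \<mu>) \<mu> (\<nu> + \<mu>) (1 - of_real (z / x)));
           g = (\<lambda>z::real. I z * of_real z powr (- a - \<nu>)
                            * hypF (a + \<nu>) (b + \<mu>) c (inverse (of_real z)))
       in g integrable_on {x..} \<and>
          Gamma a * Gamma b * of_real x powr (- a + \<mu>) * hypF a b c (inverse (of_real x)) =
            Gamma (a + \<nu>) * Gamma (b + \<mu>) / Gamma (\<nu> + \<mu>) * integral {x..} g))"
proof (intro conjI allI impI)
  fix a b \<mu> \<nu> :: complex and x z :: real
  assume H: "Re \<mu> > 0 \<and> Re \<nu> > 0 \<and> 0 < x \<and> x < z"
  have P: "((\<lambda>y::real. of_real (y - x) powr (\<mu> - 1) * of_real (z - y) powr (\<nu> - 1) * of_real y powr (a - b - \<mu>))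
          has_integral (Gamma \<mu> * Gamma \<nu> / Gamma (\<mu> + \<nu>) * of_real (z - x) powr (\<mu> + \<nu> - 1)
            * of_real x powr (a - b - \<mu>) * hypF (b - a + \<mu>) \<mu> (\<mu> + \<nu>) (1 - of_real (z / x)))) {x..z}"
    using H by (intro part1) auto
  show "let f = (\<lambda>y::real. of_real (y - x) powr (\<mu> - 1) * of_real (z - y) powr (\<nu> - 1)
                            * of_real y powr (a - b - \<mu>))
       in f integrable_on {x..z} \<and>
          integral {x..z} f =
            Gamma \<mu> * Gamma \<nu> / Gamma (\<mu> + \<nu>) * of_real (z - x) powr (\<mu> + \<nu> - 1)
            * of_real x powr (a - b - \<mu>)
            * hypF (b - a + \<mu>) \<mu> (\<mu> + \<nu>) (1 - of_real (z / x))"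
    unfolding Let_def using P by (blast intro: has_integral_integrable integral_unique)
next
  fix x :: real and a b c \<mu> \<nu> :: complex
  assume H: "x > 1 \<and> Re \<mu> > 0 \<and> Re \<nu> > 0 \<and> Re a > 0 \<and> Re b > 0 \<and> c \<notin> \<int>\<^sub>\<le>\<^sub>0"
  show "let I = (\<lambda>z::real. of_real (z - x) powr (\<nu> + \<mu> - 1)
                            * hypF (b - a + \<mu>) \<mu> (\<nu> + \<mu>) (1 - of_real (z / x)));
           g = (\<lambda>z::real. I z * of_real z powr (- a - \<nu>)
                            * hypF (a + \<nu>) (b + \<mu>) c (inverse (of_real z)))
       in g integrable_on {x..} \<and>
          Gamma a * Gamma b * of_real x powr (- a + \<mu>) * hypF a b c (inverse (of_real x)) =
            Gamma (a + \<nu>) * Gamma (b + \<mu>) / Gamma (\<nu> + \<mu>) * integral {x..} g"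
    unfolding Let_def using H by (intro part2) auto
qed

end
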